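(* Let $\mathfrak{S}=(\mathcal{X},\mathsf{S},\gamma,(\Lambda_{a})_{a\in\mathcal{A}})$ be a spectral decomposition system for the Euclidean space $\mathfrak{H}$. Let $\varphi\colon\mathcal{X}\to\left]-\infty,+\infty\right]$ be a proper $\mathsf{S}$-invariant function, let $\psi\in\Gamma_0(\mathcal{X})$ be an $\mathsf{S}$-invariant Legendre function such that $\operatorname{dom}\varphi\cap\operatorname{dom}\psi\neq\varnothing$, and let $X\in\mathfrak{H}$. Then: (i) $\operatorname{env}_{\varphi\circ\gamma}^{\psi\circ\gamma}(X)=\operatorname{env}_{\varphi}^{\psi}(\gamma(X))$; (ii) for every $Z\in\mathfrak{H}$: $Z\in\operatorname{Prox}_{\varphi\circ\gamma}^{\psi\circ\gamma}X$ if and only if $\gamma(Z)\in\operatorname{Prox}_{\varphi}^{\psi}\gamma(X)$ and there exists $a\in\mathcal{A}$ with $X=\Lambda_a\gamma(X)$ and $Z=\Lambda_a\gamma(Z)$; (iii) for every $z\in\mathcal{X}$ and $a\in\mathcal{A}_X$: $\Lambda_az\in\operatorname{Prox}_{\varphi\circ\gamma}^{\psi\circ\gamma}X$ if and only if $z\in\operatorname{Prox}_{\varphi}^{\psi}\gamma(X)$; (iv) $\operatorname{Prox}_{\varphi\circ\gamma}^{\psi\circ\gamma}X=\{\Lambda_az: z\in\operatorname{Prox}_{\varphi}^{\psi}\gamma(X),\ a\in\mathcal{A}_X\}$; (v) $\operatorname{Prox}_{\varphi\circ\gamma}^{\psi\circ\gamma}X$ is convex if and only if $\operatorname{Prox}_{\varphi}^{\psi}\gamma(X)$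 is convex; (vi) $\operatorname{Prox}_{\varphi\circ\gamma}^{\psi\circ\gamma}X$ is a singleton if and only if $\operatorname{Prox}_{\varphi}^{\psi}\gamma(X)$ is a singleton.
   Context: A Euclidean space is a finite-dimensional real inner product space; inner products are written $\langle\cdot,\cdot\rangle$ and norms $\|\cdot\|$. Let $\mathfrak{H}$ and $\mathcal{X}$ be Euclidean spaces, let $\mathsf{S}$ be a group acting on $\mathcal{X}$ by linear isometries, let $\gamma\colon\mathfrak{H}\to\mathcal{X}$, and let $(\Lambda_a)_{a\in\mathcal{A}}$ be a family of linear operators from $\mathcal{X}$ to $\mathfrak{H}$. The orbit of $x$ is $\mathsf{S}\cdot x=\{s\cdot x: s\in\mathsf{S}\}$; a map $f$ on $\mathcal{X}$ is $\mathsf{S}$-invariant if $f(s\cdot x)=f(x)$ for all $s,x$. The tuple is a spectral decomposition system for $\mathfrak{H}$ if: [A] every $\Lambda_a$ is an isometry; [B] there exists an $\mathsf{S}$-invariant $\tau\colon\mathcal{X}\to\mathcal{X}$ with $\tau(x)\in\mathsf{S}\cdot x$ for all $x$ and $\gamma\circ\Lambda_a=\tau$ for all $a$; [C] for every $X\in\mathfrak{H}$ there is $a$ with $X=\Lambda_a\gamma(X)$; [D] $\langle X,Y\rangle\leq\langle\gamma(X),\gamma(Y)\rangle$ for all $X,Y\in\mathfrak{H}$. For $X\in\mathfrak{H}$, $\mathcal{A}_X=\{a\in\mathcal{A}: X=\Lambda_a\gamma(X)\}$. For functions on a Euclidean space $\mathcal{H}$: $\operatorname{dom}f=\{f<+\infty\}$;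 proper means never $-\infty$ and $\operatorname{dom}f\neq\varnothing$; $\Gamma_0(\mathcal{H})$ is the set of proper lower semicontinuous convex functions $\mathcal{H}\to\left]-\infty,+\infty\right]$; $\partial g(x)=\{u:\langle z-x,u\rangle+g(x)\leq g(z)\ \forall z\}$. A function $g\in\Gamma_0(\mathcal{H})$ is essentially smooth if $\partial g(x)$ has at most one element for every $x$, essentially strictly convex if it is strictly convex on every convex subset of $\{x:\partial g(x)\neq\varnothing\}$, and Legendre if both. ($\psi\circ\gamma$ is a Legendre function on $\mathfrak{H}$ under the stated hypotheses, so the objects below are defined.) For a Legendre $g\in\Gamma_0(\mathcal{H})$, the Bregman distance is $D_g(y,x)=g(y)-g(x)-\langle y-x,\nabla g(x)\rangle$ if $x\in\operatorname{int}\operatorname{dom}g$ and $D_g(y,x)=+\infty$ otherwise. For $f\colon\mathcal{H}\to\left]-\infty,+\infty\right]$ with $\operatorname{dom}f\cap\operatorname{dom}g\neq\varnothing$: $\operatorname{env}_f^g(x)=\inf_{y\in\mathcal{H}}(f(y)+D_g(y,x))$ and $\operatorname{Prox}_f^g x=\operatorname{Argmin}(f+D_g(\cdot,x))$, where $\operatorname{Argmin}h$ is the set of minimizers of $h$ if $\inf h<+\infty$ and $\varnothing$ otherwise. *)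

theory Defs
  imports "HOL-Analysis.Analysis" "HOL-Library.Extended_Real"
begin

text \<open>Extended-real-valued functions with values in ]-infinity,+infinity] are modelled as
  functions into ereal; properness excludes the value -infinity.\<close>

definition edom :: "('a \<Rightarrow> ereal) \<Rightarrow> 'a set" where
  "edom f = {x. f x < \<infinity>}"

definition eproper :: "('a \<Rightarrow> ereal) \<Rightarrow> bool" where
  "eproper f \<longleftrightarrow> (\<forall>x. f x \<noteq> -\<infinity>) \<and> edom f \<noteq> {}"

definition elsc :: "('a::topological_space \<Rightarrow> ereal) \<Rightarrow> bool" where
  "elsc f \<longleftrightarrow> (\<forall>c. closed {x. f x \<le> c})"

definition econvex :: "('a::real_vector \<Rightarrow> ereal) \<Rightarrow> bool" where
  "econvex f \<longleftrightarrow> (\<forall>x y t. 0 < t \<and> t < 1 \<longrightarrow>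
      f ((1 - t) *\<^sub>R x + t *\<^sub>R y) \<le> ereal (1 - t) * f x + ereal t * f y)"

definition Gamma0 :: "('a::real_inner \<Rightarrow> ereal) \<Rightarrow> bool" where
  "Gamma0 f \<longleftrightarrow> eproper f \<and> elsc f \<and> econvex f"

definition subdiff :: "('a::real_inner \<Rightarrow> ereal) \<Rightarrow> 'a \<Rightarrow> 'a set" where
  "subdiff g x = {u. \<forall>z. ereal (inner (z - x) u) + g x \<le> g z}"

definition estrictly_convex_on :: "'a set \<Rightarrow> ('a::real_vector \<Rightarrow> ereal) \<Rightarrow> bool" where
  "estrictly_convex_on C f \<longleftrightarrow> (\<forall>x\<in>C. \<forall>y\<in>C. \<forall>t. x \<noteq> y \<and> 0 < t \<and> t < 1 \<longrightarrow>
      f ((1 - t) *\<^sub>R x + t *\<^sub>R y) < ereal (1 - t) * f x + ereal t * f y)"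

definition essentially_smooth :: "('a::real_inner \<Rightarrow> ereal) \<Rightarrow> bool" where
  "essentially_smooth g \<longleftrightarrow> Gamma0 g \<and> (\<forall>x. \<forall>u\<in>subdiff g x. \<forall>v\<in>subdiff g x. u = v)"

definition essentially_strictly_convex :: "('a::real_inner \<Rightarrow> ereal) \<Rightarrow> bool" where
  "essentially_strictly_convex g \<longleftrightarrow> Gamma0 g \<and>
     (\<forall>C. convex C \<and> C \<subseteq> {x. subdiff g x \<noteq> {}} \<longrightarrow> estrictly_convex_on C g)"

definition Legendre :: "('a::real_inner \<Rightarrow> ereal) \<Rightarrow> bool" where
  "Legendre g \<longleftrightarrow> essentially_smooth g \<and> essentially_strictly_convex g"

text \<open>Gradient of g at a point of int dom g (where a Legendre function is differentiable).\<close>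
definition egrad :: "('a::real_inner \<Rightarrow> ereal) \<Rightarrow> 'a \<Rightarrow> 'a" where
  "egrad g x = (THE u. ((\<lambda>y. real_of_ereal (g y)) has_derivative (\<lambda>h. inner u h)) (at x))"

definition bregman :: "('a::real_inner \<Rightarrow> ereal) \<Rightarrow> 'a \<Rightarrow> 'a \<Rightarrow> ereal" where
  "bregman g y x = (if x \<in> interior (edom g)
      then g y - g x - ereal (inner (y - x) (egrad g x)) else \<infinity>)"

definition env :: "('a::real_inner \<Rightarrow> ereal) \<Rightarrow> ('a \<Rightarrow> ereal) \<Rightarrow> 'a \<Rightarrow> ereal" where
  "env f g x = (INF y. f y + bregman g y x)"

definition Argmin :: "('a \<Rightarrow> ereal) \<Rightarrow> 'a set" where
  "Argmin h = (if (INF y. h y) < \<infinity> then {y. \<forall>z. h y \<le> h z} else {})"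

definition Prox :: "('a::real_inner \<Rightarrow> ereal) \<Rightarrow> ('a \<Rightarrow> ereal) \<Rightarrow> 'a \<Rightarrow> 'a set" where
  "Prox f g x = Argmin (\<lambda>y. f y + bregman g y x)"

text \<open>Group of linear isometries of X (the image of the action of the group S).\<close>
definition linear_isometry_group :: "('x::real_inner \<Rightarrow> 'x) set \<Rightarrow> bool" where
  "linear_isometry_group S \<longleftrightarrow> id \<in> S \<and> (\<forall>f\<in>S. \<forall>g\<in>S. f \<circ> g \<in> S) \<and>
     (\<forall>f\<in>S. linear f \<and> (\<forall>x. norm (f x) = norm x) \<and> (\<exists>g\<in>S. g \<circ> f = id \<and> f \<circ> g = id))"

definition orbit :: "('x \<Rightarrow> 'x) set \<Rightarrow> 'x \<Rightarrow> 'x set" where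
  "orbit S x = {s x | s. s \<in> S}"

definition S_invariant :: "('x \<Rightarrow> 'x) set \<Rightarrow> ('x \<Rightarrow> 'b) \<Rightarrow> bool" where
  "S_invariant S f \<longleftrightarrow> (\<forall>s\<in>S. \<forall>x. f (s x) = f x)"

definition spectral_decomposition_system ::
  "('x::real_inner \<Rightarrow> 'x) set \<Rightarrow> ('h::real_inner \<Rightarrow> 'x) \<Rightarrow> ('a \<Rightarrow> 'x \<Rightarrow> 'h) \<Rightarrow> bool" where
  "spectral_decomposition_system S \<gamma> \<Lambda> \<longleftrightarrow>
     linear_isometry_group S \<and>
     (\<forall>a. linear (\<Lambda> a) \<and> (\<forall>x. norm (\<Lambda> a x) = norm x)) \<and>
     (\<exists>\<tau>. S_invariant S \<tau> \<and> (\<forall>x. \<tau> x \<in> orbit S x) \<and> (\<forall>a. \<gamma> \<circ> \<Lambda> a = \<tau>)) \<and>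
     (\<forall>X. \<exists>a. X = \<Lambda> a (\<gamma> X)) \<and>
     (\<forall>X Y. inner X Y \<le> inner (\<gamma> X) (\<gamma> Y))"

definition Aset :: "('h \<Rightarrow> 'x) \<Rightarrow> ('a \<Rightarrow> 'x \<Rightarrow> 'h) \<Rightarrow> 'h \<Rightarrow> 'a set" where
  "Aset \<gamma> \<Lambda> X = {a. X = \<Lambda> a (\<gamma> X)}"

end

theory Submission
  imports Defs
begin

lemma fin_ereal: "f \<noteq> \<infinity> \<Longrightarrow> f \<noteq> -\<infinity> \<Longrightarrow> f = ereal (real_of_ereal f)"
  by (cases f) auto

lemma edom_fin: "y \<in> edom f \<Longrightarrow> f y \<noteq> -\<infinity> \<Longrightarrow> f y = ereal (real_of_ereal (f y))"
  by (auto simp: edom_def intro: fin_ereal)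

lemma real_le_ereal: "a \<noteq> -\<infinity> \<Longrightarrow> a \<le> ereal r \<Longrightarrow> real_of_ereal a \<le> r"
  by (cases a) auto

lemma econvex_fin:
  assumes "econvex f" "0 < t" "t < 1" "f x = ereal a" "f y = ereal b"
  shows "f ((1 - t) *\<^sub>R x + t *\<^sub>R y) \<le> ereal ((1 - t) * a + t * b)"
proof -
  have "f ((1 - t) *\<^sub>R x + t *\<^sub>R y) \<le> ereal (1 - t) * f x + ereal t * f y"
    using assms(1-3) unfolding econvex_def by blast
  thus ?thesis using assms(4,5) by simp
qed

lemma edom_convex:
  assumes "econvex f" "\<And>x. f x \<noteq> -\<infinity>"
  shows "convex (edom f)"
proof (rule convexI)
    fix x y and u v :: real
    assume xy: "x \<in> edom f" "y \<in> edom f" and uv: "0 \<le> u" "0 \<le> v" "u + v = 1"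
    obtain a b where ab: "f x = ereal a" "f y = ereal b"
      using edom_fin[OF xy(1) assms(2)] edom_fin[OF xy(2) assms(2)] by blast
    show "u *\<^sub>R x + v *\<^sub>R y \<in> edom f"
    proof (cases "v = 0 \<or> v = 1")
      case True thus "u *\<^sub>R x + v *\<^sub>R y \<in> edom f" using xy uv by auto
    next
      case False
      hence "0 < v" "v < 1" using uv by auto
      from econvex_fin[OF assms(1) this ab] have "f ((1 - v) *\<^sub>R x + v *\<^sub>R y) < \<infinity>"
        by (rule le_less_trans) simp
      moreover have "u = 1 - v" using uv by simp
      ultimately show "u *\<^sub>R x + v *\<^sub>R y \<in> edom f" unfolding edom_def by simp
    qed
qed

lemma econvex_convex_on:
  assumes "econvex f" "\<And>x. f x \<noteq> -\<infinity>" "convex U" "U \<subseteq> edom f"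
  shows "convex_on U (\<lambda>y. real_of_ereal (f y))"
proof (rule convex_onI)
  fix t :: real and x y assume t: "0 < t" "t < 1" and xy: "x \<in> U" "y \<in> U"
  have fx: "f x = ereal (real_of_ereal (f x))" "f y = ereal (real_of_ereal (f y))"
    using xy assms(2,4) unfolding edom_def by (auto intro!: fin_ereal)
  from econvex_fin[OF assms(1) t fx]
  have le: "f ((1 - t) *\<^sub>R x + t *\<^sub>R y) \<le> ereal ((1 - t) * real_of_ereal (f x) + t * real_of_ereal (f y))" .
  have "f ((1 - t) *\<^sub>R x + t *\<^sub>R y) \<noteq> -\<infinity>" using assms(2) .
  with le show "real_of_ereal (f ((1 - t) *\<^sub>R x + t *\<^sub>R y)) \<le> (1 - t) * real_of_ereal (f x) + t * real_of_ereal (f y)"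
    using real_le_ereal by blast
qed (fact)

lemma subgrad_exists:
  fixes f :: "'a::euclidean_space \<Rightarrow> ereal"
  assumes cf: "econvex f" and nm: "\<And>x. f x \<noteq> -\<infinity>" and xi: "x \<in> interior (edom f)"
  shows "\<exists>v. v \<in> subdiff f x"
proof -
  define fr where "fr = (\<lambda>y. real_of_ereal (f y))"
  have xd: "x \<in> edom f" using xi interior_subset by blast
  have fx: "f x = ereal (fr x)" using xd nm unfolding edom_def fr_def by (auto intro!: fin_ereal)
  define A where "A = {p :: 'a \<times> real. f (fst p) < ereal (snd p)}"
  define B where "B = {(x, fr x)}"
  have cA: "convex A"
  proof (rule convexI)
    fix p q :: "'a \<times> real" and u v :: real
    assume p: "p \<in> A" and q: "q \<in> A" and uv: "0 \<le> u" "0 \<le> v" "u + v = 1"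
    show "u *\<^sub>R p + v *\<^sub>R q \<in> A"
    proof (cases "v = 0 \<or> v = 1")
      case True thus ?thesis using p q uv by auto
    next
      case False
      hence v: "0 < v" "v < 1" using uv by auto
      have "f (fst p) < ereal (snd p)" "f (fst q) < ereal (snd q)" using p q unfolding A_def by auto
      hence "f (fst p) < \<infinity>" "f (fst q) < \<infinity>" using less_trans[of _ _ \<infinity>] by auto
      hence "fst p \<in> edom f" "fst q \<in> edom f" unfolding edom_def by auto
      then obtain a b where ab: "f (fst p) = ereal a" "f (fst q) = ereal b"
        using edom_fin[of "fst p" f] edom_fin[of "fst q" f] nm by blast
      have "a < snd p" "b < snd q" using p q ab unfolding A_def by auto
      have "f ((1 - v) *\<^sub>R fst p + v *\<^sub>R fst q) \<le> ereal ((1 - v) * a + v * b)"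
        by (rule econvex_fin[OF cf v ab])
      also have "(1 - v) * a + v * b < (1 - v) * snd p + v * snd q"
        using \<open>a < snd p\<close> \<open>b < snd q\<close> v
        by (intro add_strict_mono mult_strict_left_mono) auto
      hence "ereal ((1 - v) * a + v * b) < ereal ((1 - v) * snd p + v * snd q)" by simp
      finally have "f ((1 - v) *\<^sub>R fst p + v *\<^sub>R fst q) < ereal ((1 - v) * snd p + v * snd q)" .
      moreover have "u = 1 - v" using uv by simp
      ultimately show ?thesis unfolding A_def by simp
    qed
  qed
  have "(x, fr x + 1) \<in> A" unfolding A_def using fx by simp
  hence Ane: "A \<noteq> {}" by blast
  have disj: "B \<inter> A = {}" unfolding A_def B_def using fx by auto
  obtain a b where ab: "a \<noteq> 0" "\<forall>p\<in>B. inner a p \<le> b" "\<forall>p\<in>A. inner a p \<ge> b"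
    using separating_hyperplane_sets[OF _ cA _ Ane disj] unfolding B_def by auto
  obtain u c where a: "a = (u, c)" by (cases a)
  have h1: "inner u x + c * fr x \<le> b" using ab(2) a unfolding B_def by auto
  have h2: "inner u y + c * t \<ge> b" if "f y < ereal t" for y t
    using ab(3) a that unfolding A_def by auto
  have c0: "c \<ge> 0"
  proof -
    have "inner u x + c * (fr x + 1) \<ge> b" using h2[of x "fr x + 1"] fx by simp
    with h1 show ?thesis by (simp add: algebra_simps)
  qed
  have cne: "c \<noteq> 0"
  proof
    assume c: "c = 0"
    hence u0: "u \<noteq> 0" using ab(1) a by (auto simp: zero_prod_def)
    obtain e where e: "e > 0" "ball x e \<subseteq> edom f" using xi mem_interior by blast
    define d where "d = e / (2 * norm u)"
    have d: "d > 0" using e u0 unfolding d_def by simp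
    have "norm (d *\<^sub>R u) = e / 2" using u0 e unfolding d_def by simp
    hence "x - d *\<^sub>R u \<in> ball x e" using e by (simp add: dist_norm)
    hence "x - d *\<^sub>R u \<in> edom f" using e by blast
    hence "f (x - d *\<^sub>R u) = ereal (fr (x - d *\<^sub>R u))"
      using nm unfolding fr_def by (rule edom_fin)
    hence fin: "f (x - d *\<^sub>R u) < ereal (fr (x - d *\<^sub>R u) + 1)" by simp
    from h2[OF fin] c have "inner u (x - d *\<^sub>R u) \<ge> b" by simp
    with h1 c have "inner u (x - d *\<^sub>R u) \<ge> inner u x" by simp
    hence "d * inner u u \<le> 0" by (simp add: inner_diff_right)
    moreover have "inner u u > 0" using u0 by simp
    ultimately show False using d by (simp add: mult_le_0_iff)
  qed
  hence cpos: "c > 0" using c0 by simp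
  define v where "v = - (1 / c) *\<^sub>R u"
  have "v \<in> subdiff f x"
    unfolding subdiff_def
  proof (safe)
    fix z
    show "ereal (inner (z - x) v) + f x \<le> f z"
    proof (cases "f z = \<infinity>")
      case True thus ?thesis by simp
    next
      case False
      hence fz: "f z = ereal (fr z)" using nm unfolding fr_def by (auto intro!: fin_ereal)
      have key: "inner u z + c * fr z \<ge> inner u x + c * fr x"
      proof (rule ccontr)
        assume neg: "\<not> inner u z + c * fr z \<ge> inner u x + c * fr x"
        define \<delta> where "\<delta> = (inner u x + c * fr x - inner u z - c * fr z) / (2 * c)"
        have "\<delta> > 0" using neg cpos unfolding \<delta>_def by (simp add: field_simps)
        hence "f z < ereal (fr z + \<delta>)" using fz by simp
        from h2[OF this] h1 have "inner u z + c * (fr z + \<delta>) \<ge> inner u x + c * fr x" by simp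
        moreover have "c * \<delta> = (inner u x + c * fr x - inner u z - c * fr z) / 2"
          using cpos unfolding \<delta>_def by (simp add: field_simps)
        ultimately show False using neg by (simp add: algebra_simps)
      qed
      have "inner (z - x) v = - (inner u z - inner u x) / c"
        unfolding v_def using cne by (simp add: inner_diff_left inner_diff_right inner_commute field_simps)
      also have "\<dots> \<le> fr z - fr x" using key cpos by (simp add: field_simps)
      finally show ?thesis using fz fx by simp
    qed
  qed
  thus ?thesis by blast
qed

lemma subdiff_real:
  assumes "u \<in> subdiff f y" "f y = ereal a" "f z = ereal b"
  shows "inner (z - y) u + a \<le> b"
proof -
  have "ereal (inner (z - y) u) + f y \<le> f z" using assms(1) unfolding subdiff_def by blast
  thus ?thesis using assms(2,3) by simp
qed

lemma diff_from_subgrad: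
  fixes f :: "'a::euclidean_space \<Rightarrow> ereal"
  assumes r: "r > 0"
    and fin: "\<And>y. y \<in> ball x0 r \<Longrightarrow> f y = ereal (real_of_ereal (f y))"
    and sub: "\<And>y. y \<in> ball x0 r \<Longrightarrow> \<exists>u\<in>subdiff f y. norm u \<le> K"
    and G: "G \<in> subdiff f x0" and uniq: "\<And>u. u \<in> subdiff f x0 \<Longrightarrow> u = G"
  shows "((\<lambda>y. real_of_ereal (f y)) has_derivative (\<lambda>h. inner G h)) (at x0)"
proof -
  define fr where "fr = (\<lambda>y. real_of_ereal (f y))"
  have x0b: "x0 \<in> ball x0 r" using r by simp
  have fx0: "f x0 = ereal (fr x0)" using fin[OF x0b] unfolding fr_def .
  have lowG: "fr y \<ge> fr x0 + inner (y - x0) G" if "y \<in> ball x0 r" for y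
    using subdiff_real[OF G fx0, of y "fr y"] fin[OF that] unfolding fr_def by simp
  have usc: "\<exists>\<delta>>0. \<delta> \<le> r \<and> (\<forall>y. norm (y - x0) < \<delta> \<longrightarrow>
      (\<forall>u\<in>subdiff f y. norm u \<le> K \<longrightarrow> norm (u - G) < e))" if e: "e > 0" for e
  proof (rule ccontr)
    assume neg: "\<not> ?thesis"
    have "\<forall>n. \<exists>y u. norm (y - x0) < min r (inverse (real (Suc n))) \<and> u \<in> subdiff f y
            \<and> norm u \<le> K \<and> norm (u - G) \<ge> e"
    proof
      fix n
      have "min r (inverse (real (Suc n))) > 0" using r by simp
      with neg show "\<exists>y u. norm (y - x0) < min r (inverse (real (Suc n))) \<and> u \<in> subdiff f y
            \<and> norm u \<le> K \<and> norm (u - G) \<ge> e"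
        by (metis min.cobounded1 not_less)
    qed
    then obtain Y U where YU: "\<And>n. norm (Y n - x0) < min r (inverse (real (Suc n)))"
      "\<And>n. U n \<in> subdiff f (Y n)" "\<And>n. norm (U n) \<le> K" "\<And>n. norm (U n - G) \<ge> e"
      by metis
    have Yb: "Y n \<in> ball x0 r" for n using YU(1)[of n] by (simp add: dist_norm norm_minus_commute)
    have "(\<lambda>n. Y n - x0) \<longlonglongrightarrow> 0"
    proof (rule Lim_null_comparison)
      show "\<forall>\<^sub>F n in sequentially. norm (Y n - x0) \<le> inverse (real (Suc n))"
      proof (intro always_eventually allI)
        fix n show "norm (Y n - x0) \<le> inverse (real (Suc n))"
          using YU(1)[of n] by (simp only: min_less_iff_conj) (simp add: less_imp_le)
      qed
      show "(\<lambda>n. inverse (real (Suc n))) \<longlonglongrightarrow> 0" by (rule LIMSEQ_inverse_real_of_nat)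
    qed
    hence Ylim: "Y \<longlonglongrightarrow> x0" by (rule LIM_zero_cancel)
    have "compact (cball (0::'a) K)" by simp
    moreover have "\<forall>n. U n \<in> cball 0 K" using YU(3) by simp
    ultimately obtain l \<rho> where l: "l \<in> cball 0 K" "strict_mono \<rho>" "(U \<circ> \<rho>) \<longlonglongrightarrow> l"
      unfolding compact_def by meson
    have Yr: "(Y \<circ> \<rho>) \<longlonglongrightarrow> x0" by (rule LIMSEQ_subseq_LIMSEQ[OF Ylim l(2)])
    have "l \<in> subdiff f x0"
      unfolding subdiff_def
    proof (safe)
      fix z
      show "ereal (inner (z - x0) l) + f x0 \<le> f z"
      proof (cases "f z = \<infinity>")
        case True thus ?thesis by simp
      next
        case False
        have "f z \<noteq> -\<infinity>"
        proof
          assume mz: "f z = -\<infinity>"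
          have "ereal (inner (z - Y 0) (U 0)) + f (Y 0) \<le> f z"
            using YU(2)[of 0] unfolding subdiff_def by blast
          moreover have "f (Y 0) = ereal (real_of_ereal (f (Y 0)))" by (rule fin[OF Yb[of 0]])
          ultimately show False using mz by simp
        qed
        hence fz: "f z = ereal (fr z)" using False unfolding fr_def by (rule_tac fin_ereal) auto
        have ineq: "inner (z - Y n) (U n) + (fr x0 + inner (Y n - x0) G) \<le> fr z" for n
        proof -
          have "inner (z - Y n) (U n) + fr (Y n) \<le> fr z"
            by (rule subdiff_real[OF YU(2)[of n] _ fz]) (use fin[OF Yb[of n]] fr_def in simp)
          thus ?thesis using lowG[OF Yb[of n]] by simp
        qed
        have lim: "(\<lambda>n. inner (z - (Y \<circ> \<rho>) n) ((U \<circ> \<rho>) n) + (fr x0 + inner ((Y \<circ> \<rho>) n - x0) G))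
            \<longlonglongrightarrow> inner (z - x0) l + (fr x0 + inner (x0 - x0) G)"
          by (intro tendsto_intros Yr l(3))
        have "inner (z - x0) l + (fr x0 + inner (x0 - x0) G) \<le> fr z"
          by (rule LIMSEQ_le_const2[OF lim]) (use ineq in auto)
        thus ?thesis using fz fx0 by simp
      qed
    qed
    hence "l = G" by (rule uniq)
    have "(\<lambda>n. norm ((U \<circ> \<rho>) n - G)) \<longlonglongrightarrow> norm (l - G)"
      by (intro tendsto_intros l(3))
    hence "e \<le> norm (l - G)" by (rule LIMSEQ_le_const) (use YU(4) in auto)
    with \<open>l = G\<close> e show False by simp
  qed
  show ?thesis
    unfolding has_derivative_at_alt fr_def[symmetric]
  proof (intro conjI allI impI)
    show "bounded_linear (\<lambda>h. inner G h)" by (rule bounded_linear_inner_right)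
  next
    fix e :: real assume e: "e > 0"
    obtain \<delta> where d: "\<delta> > 0" "\<delta> \<le> r" and dd: "\<And>y u. norm (y - x0) < \<delta> \<Longrightarrow> u \<in> subdiff f y \<Longrightarrow> norm u \<le> K \<Longrightarrow> norm (u - G) < e"
      using usc[OF e] by blast
    show "\<exists>d>0. \<forall>y. norm (y - x0) < d \<longrightarrow> norm (fr y - fr x0 - inner G (y - x0)) \<le> e * norm (y - x0)"
    proof (intro exI[of _ \<delta>] conjI allI impI d(1))
      fix y assume y: "norm (y - x0) < \<delta>"
      hence yb: "y \<in> ball x0 r" using d by (simp add: dist_norm norm_minus_commute)
      obtain u where u: "u \<in> subdiff f y" "norm u \<le> K" using sub[OF yb] by blast
      have nu: "norm (u - G) < e" by (rule dd[OF y u])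
      have fy: "f y = ereal (fr y)" using fin[OF yb] unfolding fr_def .
      have up: "inner (x0 - y) u + fr y \<le> fr x0" by (rule subdiff_real[OF u(1) fy fx0])
      have lo: "fr y \<ge> fr x0 + inner (y - x0) G" by (rule lowG[OF yb])
      have "fr y - fr x0 - inner G (y - x0) \<le> inner (y - x0) (u - G)"
        using up by (simp add: inner_diff_left inner_diff_right inner_commute algebra_simps)
      also have "\<dots> \<le> norm (y - x0) * norm (u - G)" by (rule norm_cauchy_schwarz)
      also have "\<dots> \<le> norm (y - x0) * e" using nu by (simp add: mult_left_mono)
      finally have a: "fr y - fr x0 - inner G (y - x0) \<le> e * norm (y - x0)" by (simp add: mult.commute)
      have b: "fr y - fr x0 - inner G (y - x0) \<ge> 0" using lo by (simp add: inner_commute)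
      show "norm (fr y - fr x0 - inner G (y - x0)) \<le> e * norm (y - x0)" using a b by simp
    qed
  qed
qed

lemma local_bounded_subgrad:
  fixes f :: "'a::euclidean_space \<Rightarrow> ereal"
  assumes cf: "econvex f" and nm: "\<And>x. f x \<noteq> -\<infinity>" and xi: "x \<in> interior (edom f)"
  shows "\<exists>r>0. \<exists>K. ball x r \<subseteq> interior (edom f) \<and> (\<forall>y\<in>ball x r. \<exists>u\<in>subdiff f y. norm u \<le> K)"
proof -
  define U where "U = interior (edom f)"
  define fr where "fr = (\<lambda>y. real_of_ereal (f y))"
  have oU: "open U" unfolding U_def by simp
  have cU: "convex U" unfolding U_def by (rule convex_interior[OF edom_convex[OF cf nm]])
  have UD: "U \<subseteq> edom f" unfolding U_def by (rule interior_subset)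
  have "convex_on U fr" unfolding fr_def by (rule econvex_convex_on[OF cf nm cU UD])
  hence "continuous_on U fr" by (rule convex_on_continuous[OF oU])
  hence "isCont fr x" using xi oU unfolding U_def[symmetric] continuous_on_eq_continuous_at[OF oU] by blast
  then obtain d where d: "d > 0" "\<And>y. dist y x < d \<Longrightarrow> dist (fr y) (fr x) < 1"
    unfolding continuous_at_eps_delta by (meson zero_less_one)
  obtain e where e: "e > 0" "ball x e \<subseteq> U" using xi oU unfolding U_def[symmetric]
    using open_contains_ball by blast
  define R where "R = min d e"
  have R: "R > 0" using d e unfolding R_def by simp
  have RU: "ball x R \<subseteq> U" using e unfolding R_def by auto
  have Rb: "\<bar>fr y - fr x\<bar> < 1" if "y \<in> ball x R" for y
    using d(2)[of y] that unfolding R_def by (simp add: dist_norm norm_minus_commute)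
  have fin: "f y = ereal (fr y)" if "y \<in> U" for y
    using edom_fin[of y f] nm that UD unfolding fr_def by blast
  show ?thesis
  proof (rule exI[of _ "R/2"], intro conjI)
    show "R/2 > 0" using R by simp
    show "\<exists>K. ball x (R/2) \<subseteq> interior (edom f) \<and> (\<forall>y\<in>ball x (R/2). \<exists>u\<in>subdiff f y. norm u \<le> K)"
  proof (rule exI[of _ "8/R"], intro conjI ballI)
    have "ball x (R/2) \<subseteq> ball x R" using R by (intro subset_ball) simp
    thus "ball x (R/2) \<subseteq> interior (edom f)" using RU unfolding U_def by (rule subset_trans)
  next
    fix y assume y: "y \<in> ball x (R/2)"
    have "ball x (R/2) \<subseteq> ball x R" using R by (intro subset_ball) simp
    hence yU: "y \<in> U" using RU y by blast
    obtain u where u: "u \<in> subdiff f y" using subgrad_exists[OF cf nm, of y] yU unfolding U_def by blast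
    show "\<exists>u\<in>subdiff f y. norm u \<le> 8/R"
    proof (intro bexI[OF _ u])
      show "norm u \<le> 8/R"
      proof (cases "u = 0")
        case True thus ?thesis using R by simp
      next
        case False
        define z where "z = y + (R/4 / norm u) *\<^sub>R u"
        have nz: "norm (z - y) = R/4" using False R unfolding z_def by simp
        have "dist z x \<le> dist z y + dist y x" by (rule dist_triangle)
        also have "\<dots> < R/4 + R/2" using nz y by (simp add: dist_norm norm_minus_commute)
        finally have zb: "z \<in> ball x R" using R by (simp add: dist_commute)
        have yb: "y \<in> ball x R" using y R by (simp add: dist_commute)
        have "inner (z - y) u + fr y \<le> fr z"
          by (rule subdiff_real[OF u fin[OF yU] fin]) (use zb RU in auto)
        moreover have "inner (z - y) u = R/4 * norm u"
          using False unfolding z_def by (simp add: power2_norm_eq_inner[symmetric] power2_eq_square)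
        moreover have "fr z - fr y < 2" using Rb[OF zb] Rb[OF yb] by simp
        ultimately have "R/4 * norm u < 2" by simp
        thus ?thesis using R by (simp add: field_simps)
      qed
    qed
  qed
  qed
qed

lemma iso_inner:
  assumes "linear f" "\<And>x. norm (f x) = norm x"
  shows "inner (f x) (f y) = inner x y"
proof -
  interpret linear f by fact
  have "norm (f (x + y))^2 = norm (x + y)^2" using assms(2) by simp
  hence "inner (f x + f y) (f x + f y) = inner (x + y) (x + y)"
    by (simp add: add power2_norm_eq_inner)
  hence "inner (f x) (f x) + 2 * inner (f x) (f y) + inner (f y) (f y)
       = inner x x + 2 * inner x y + inner y y"
    by (simp add: inner_add_left inner_add_right inner_commute)
  moreover have "inner (f x) (f x) = inner x x" "inner (f y) (f y) = inner y y"
    using assms(2) by (metis power2_norm_eq_inner)+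
  ultimately show ?thesis by simp
qed


lemma par_eq:
  fixes a b :: "'a::real_inner"
  assumes "norm a = r" "norm b = r" "norm ((1/2) *\<^sub>R (a + b)) = r"
  shows "a = b"
proof -
  have "norm (a + b) = 2 * r" using assms(3) by simp
  hence "inner (a + b) (a + b) = 4 * r^2" by (simp add: power2_norm_eq_inner[symmetric] power_mult_distrib)
  moreover have "inner a a = r^2" "inner b b = r^2" using assms(1,2) by (simp_all add: power2_norm_eq_inner[symmetric])
  ultimately have "inner (a - b) (a - b) = 0"
    by (simp add: inner_add_left inner_add_right inner_diff_left inner_diff_right inner_commute)
  thus ?thesis by simp
qed

lemma face_lemma:
  fixes Ob :: "'a::real_inner set"
  assumes v: "v \<in> convex hull Ob" and le: "\<And>p. p \<in> Ob \<Longrightarrow> inner p g \<le> c" and ge: "inner v g \<ge> c"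
    and C: "convex C" and eqC: "\<And>p. p \<in> Ob \<Longrightarrow> inner p g = c \<Longrightarrow> p \<in> C"
  shows "v \<in> C"
proof -
  obtain T u where T: "finite T" "T \<subseteq> Ob" "\<And>x. x \<in> T \<Longrightarrow> 0 \<le> u x" "sum u T = 1"
      "(\<Sum>x\<in>T. u x *\<^sub>R x) = v"
    using v unfolding convex_hull_explicit by blast
  have "inner v g = (\<Sum>x\<in>T. u x * inner x g)"
    using T(5) by (auto simp: inner_sum_left)
  hence "(\<Sum>x\<in>T. u x * (c - inner x g)) = c - inner v g"
    using T(4) by (simp add: algebra_simps sum_subtractf sum_distrib_left[symmetric])
  hence s0: "(\<Sum>x\<in>T. u x * (c - inner x g)) \<le> 0" using ge by simp
  have nn: "\<And>x. x \<in> T \<Longrightarrow> 0 \<le> u x * (c - inner x g)" using T(2,3) le by auto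
  have "0 \<le> (\<Sum>x\<in>T. u x * (c - inner x g))" by (rule sum_nonneg) (rule nn)
  hence sum0: "(\<Sum>x\<in>T. u x * (c - inner x g)) = 0" using s0 by linarith
  have z: "\<And>x. x \<in> T \<Longrightarrow> u x * (c - inner x g) = 0"
    using sum_nonneg_eq_0_iff[of T "\<lambda>x. u x * (c - inner x g)"] T(1) nn sum0 by blast
  define T1 where "T1 = {x\<in>T. u x \<noteq> 0}"
  have "(\<Sum>x\<in>T1. u x *\<^sub>R x) = v" unfolding T1_def using T(1,5)
    by (subst sum.mono_neutral_left[of T]) auto
  moreover have "sum u T1 = 1" unfolding T1_def using T(1,4)
    by (subst sum.mono_neutral_left[of T]) auto
  moreover have "\<And>x. x \<in> T1 \<Longrightarrow> x \<in> C"
  proof -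
    fix x assume x: "x \<in> T1"
    hence "u x \<noteq> 0" "x \<in> T" unfolding T1_def by auto
    hence "inner x g = c" using z[of x] by simp
    thus "x \<in> C" using eqC \<open>x \<in> T\<close> T(2) by blast
  qed
  ultimately show ?thesis using convex_sum[OF _ C, of T1 u "\<lambda>x. x"] T(1,3) unfolding T1_def by auto
qed

lemma strict_same:
  fixes \<psi> :: "'x::euclidean_space \<Rightarrow> ereal"
  assumes L: "Legendre \<psi>" and gx: "g \<in> subdiff \<psi> x" and gy: "g \<in> subdiff \<psi> y"
    and vx: "\<psi> x = ereal r" and vy: "\<psi> y = ereal r"
  shows "x = y"
proof (rule ccontr)
  assume ne: "x \<noteq> y"
  have G0: "Gamma0 \<psi>" and esc: "essentially_strictly_convex \<psi>"
    using L unfolding Legendre_def essentially_smooth_def by auto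
  have cf: "econvex \<psi>" using G0 unfolding Gamma0_def by simp
  have i1: "inner (y - x) g \<le> 0" using subdiff_real[OF gx vx vy] by simp
  have i2: "inner (x - y) g \<le> 0" using subdiff_real[OF gy vy vx] by simp
  have i0: "inner (y - x) g = 0" using i1 i2 by (simp add: inner_diff_left)
  have val: "\<psi> ((1 - t) *\<^sub>R x + t *\<^sub>R y) = ereal r" and sg: "g \<in> subdiff \<psi> ((1 - t) *\<^sub>R x + t *\<^sub>R y)"
    if t: "0 \<le> t" "t \<le> 1" for t
  proof -
    define w where "w = (1 - t) *\<^sub>R x + t *\<^sub>R y"
    have wx: "w - x = t *\<^sub>R (y - x)" unfolding w_def by (simp add: algebra_simps)
    have up: "\<psi> w \<le> ereal r"
    proof (cases "t = 0 \<or> t = 1")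
      case True thus ?thesis using vx vy unfolding w_def by auto
    next
      case False
      hence "0 < t" "t < 1" using t by auto
      from econvex_fin[OF cf this vx vy] show ?thesis unfolding w_def by (simp add: algebra_simps)
    qed
    have "ereal (inner (w - x) g) + \<psi> x \<le> \<psi> w" using gx unfolding subdiff_def by blast
    moreover have "inner (w - x) g = 0" using wx i0 by simp
    ultimately have lo: "ereal r \<le> \<psi> w" using vx by simp
    show "\<psi> ((1 - t) *\<^sub>R x + t *\<^sub>R y) = ereal r" using up lo unfolding w_def by simp
    show "g \<in> subdiff \<psi> ((1 - t) *\<^sub>R x + t *\<^sub>R y)"
      unfolding subdiff_def w_def[symmetric]
    proof safe
      fix z
      have "ereal (inner (z - x) g) + \<psi> x \<le> \<psi> z" using gx unfolding subdiff_def by blast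
      moreover have "inner (z - w) g = inner (z - x) g"
        using \<open>inner (w - x) g = 0\<close> by (simp add: inner_diff_left)
      ultimately show "ereal (inner (z - w) g) + \<psi> w \<le> \<psi> z" using up lo vx by simp
    qed
  qed
  have seg: "closed_segment x y \<subseteq> {z. subdiff \<psi> z \<noteq> {}}"
    unfolding closed_segment_def using sg by blast
  have "estrictly_convex_on (closed_segment x y) \<psi>"
    using esc seg unfolding essentially_strictly_convex_def by (simp add: convex_closed_segment)
  hence H: "\<forall>a\<in>closed_segment x y. \<forall>b\<in>closed_segment x y. \<forall>t. a \<noteq> b \<and> 0 < t \<and> t < 1 \<longrightarrow>
      \<psi> ((1 - t) *\<^sub>R a + t *\<^sub>R b) < ereal (1 - t) * \<psi> a + ereal t * \<psi> b"
    unfolding estrictly_convex_on_def .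
  have xs: "x \<in> closed_segment x y" "y \<in> closed_segment x y" by auto
  have "\<psi> ((1 - 1/2) *\<^sub>R x + (1/2) *\<^sub>R y) < ereal (1 - 1/2) * \<psi> x + ereal (1/2) * \<psi> y"
    using H[rule_format, OF xs, where t="1/2"] ne by simp
  moreover have "\<psi> ((1 - 1/2) *\<^sub>R x + (1/2) *\<^sub>R y) = ereal r" by (rule val) auto
  ultimately show False using vx vy by simp
qed

locale sdsys =
  fixes S :: "('x::euclidean_space \<Rightarrow> 'x) set" and \<gamma> :: "'h::euclidean_space \<Rightarrow> 'x"
    and \<Lambda> :: "'i \<Rightarrow> 'x \<Rightarrow> 'h"
  assumes sds: "spectral_decomposition_system S \<gamma> \<Lambda>"
begin

lemma grp: "linear_isometry_group S" using sds unfolding spectral_decomposition_system_def by blast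

lemma S_lin: "s \<in> S \<Longrightarrow> linear s" using grp unfolding linear_isometry_group_def by blast
lemma S_iso: "s \<in> S \<Longrightarrow> norm (s z) = norm z" using grp unfolding linear_isometry_group_def by blast
lemma S_inner: "s \<in> S \<Longrightarrow> inner (s u) (s v) = inner u v"
  by (rule iso_inner[OF S_lin S_iso])
lemma S_inv: "s \<in> S \<Longrightarrow> \<exists>s'\<in>S. (\<forall>z. s' (s z) = z) \<and> (\<forall>z. s (s' z) = z)"
proof -
  assume s: "s \<in> S"
  then obtain s' where "s' \<in> S" "s' \<circ> s = id" "s \<circ> s' = id"
    using grp unfolding linear_isometry_group_def by blast
  have "\<forall>z. s' (s z) = z" using fun_cong[OF \<open>s' \<circ> s = id\<close>] by simp
  moreover have "\<forall>z. s (s' z) = z" using fun_cong[OF \<open>s \<circ> s' = id\<close>] by simp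
  ultimately show ?thesis using \<open>s' \<in> S\<close> by blast
qed
lemma S_comp: "s \<in> S \<Longrightarrow> t \<in> S \<Longrightarrow> (\<lambda>z. s (t z)) \<in> S"
proof -
  assume "s \<in> S" "t \<in> S"
  hence "s \<circ> t \<in> S" using grp unfolding linear_isometry_group_def by blast
  thus ?thesis by (simp add: comp_def)
qed

lemma L_lin: "linear (\<Lambda> a)" using sds unfolding spectral_decomposition_system_def by blast
lemma L_iso: "norm (\<Lambda> a z) = norm z" using sds unfolding spectral_decomposition_system_def by blast
lemma L_inner: "inner (\<Lambda> a u) (\<Lambda> a v) = inner u v" by (rule iso_inner[OF L_lin L_iso])
lemma L_diff: "\<Lambda> a u - \<Lambda> a v = \<Lambda> a (u - v)" using L_lin by (simp add: linear_diff)
lemma L_inj: "\<Lambda> a u = \<Lambda> a v \<Longrightarrow> u = v"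
proof -
  assume "\<Lambda> a u = \<Lambda> a v"
  hence "\<Lambda> a (u - v) = 0" by (simp add: L_diff[symmetric])
  hence "norm (u - v) = 0" using L_iso[of a "u - v"] by simp
  thus "u = v" by simp
qed

lemma tau_ex: "\<exists>\<tau>. S_invariant S \<tau> \<and> (\<forall>x. \<tau> x \<in> orbit S x) \<and> (\<forall>a. \<gamma> \<circ> \<Lambda> a = \<tau>)"
  using sds unfolding spectral_decomposition_system_def by blast

lemma tau_eq: "\<exists>\<tau>. S_invariant S \<tau> \<and> (\<forall>x. \<tau> x \<in> orbit S x) \<and> (\<forall>a z. \<gamma> (\<Lambda> a z) = \<tau> z)"
proof -
  obtain \<tau> where t: "S_invariant S \<tau>" "\<forall>x. \<tau> x \<in> orbit S x" "\<forall>a. \<gamma> \<circ> \<Lambda> a = \<tau>"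
    using tau_ex by blast
  have "\<forall>a z. \<gamma> (\<Lambda> a z) = \<tau> z"
  proof (intro allI)
    fix a z show "\<gamma> (\<Lambda> a z) = \<tau> z" using fun_cong[OF t(3)[rule_format, of a], of z] by simp
  qed
  thus ?thesis using t(1,2) by blast
qed

lemma tau_ab: "\<gamma> (\<Lambda> a z) = \<gamma> (\<Lambda> b z)"
  using tau_eq by auto
lemma tau_orb: "\<exists>s\<in>S. \<gamma> (\<Lambda> a z) = s z"
proof -
  obtain \<tau> where t: "\<forall>x. \<tau> x \<in> orbit S x" "\<forall>a z. \<gamma> (\<Lambda> a z) = \<tau> z" using tau_eq by blast
  have "\<tau> z \<in> orbit S z" using t(1) by blast
  then obtain s where "s \<in> S" "\<tau> z = s z" unfolding orbit_def by blast
  thus ?thesis using t(2) by auto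
qed
lemma tau_inv: "s \<in> S \<Longrightarrow> \<gamma> (\<Lambda> a (s z)) = \<gamma> (\<Lambda> a z)"
proof -
  assume s: "s \<in> S"
  obtain \<tau> where t: "S_invariant S \<tau>" "\<forall>a z. \<gamma> (\<Lambda> a z) = \<tau> z" using tau_eq by blast
  show ?thesis using t s unfolding S_invariant_def by simp
qed
lemma dec: "\<exists>a. X = \<Lambda> a (\<gamma> X)" using sds unfolding spectral_decomposition_system_def by blast
lemma fan: "inner X Y \<le> inner (\<gamma> X) (\<gamma> Y)" using sds unfolding spectral_decomposition_system_def by blast

lemma norm_g: "norm (\<gamma> X) = norm X"
proof -
  obtain a where a: "X = \<Lambda> a (\<gamma> X)" using dec by blast
  have "norm X = norm (\<Lambda> a (\<gamma> X))" using a by (rule arg_cong)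
  thus ?thesis using L_iso[of a "\<gamma> X"] by simp
qed
lemma canon: "\<gamma> (\<Lambda> a (\<gamma> X)) = \<gamma> X"
proof -
  obtain b where "X = \<Lambda> b (\<gamma> X)" using dec by blast
  hence e: "\<gamma> X = \<gamma> (\<Lambda> b (\<gamma> X))" by (rule arg_cong)
  have "\<gamma> (\<Lambda> a (\<gamma> X)) = \<gamma> (\<Lambda> b (\<gamma> X))" by (rule tau_ab)
  also have "\<dots> = \<gamma> X" by (rule e[symmetric])
  finally show ?thesis .
qed
lemma fanX: "inner u v \<le> inner (\<gamma> (\<Lambda> a u)) (\<gamma> (\<Lambda> a v))"
  using fan[of "\<Lambda> a u" "\<Lambda> a v"] L_inner by simp
lemma inv_f: "S_invariant S f \<Longrightarrow> f (\<gamma> (\<Lambda> a z)) = f z"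
proof -
  assume "S_invariant S f"
  moreover obtain s where "s \<in> S" "\<gamma> (\<Lambda> a z) = s z" using tau_orb by blast
  ultimately show ?thesis unfolding S_invariant_def by simp
qed
lemma align: "s \<in> S \<Longrightarrow> inner (s (\<gamma> Y1)) (\<gamma> Y2) \<le> inner (\<gamma> Y1) (\<gamma> Y2)"
proof -
  fix a assume s: "s \<in> S"
  have "inner (s (\<gamma> Y1)) (\<gamma> Y2) \<le> inner (\<gamma> (\<Lambda> a (s (\<gamma> Y1)))) (\<gamma> (\<Lambda> a (\<gamma> Y2)))" by (rule fanX)
  also have "\<dots> = inner (\<gamma> Y1) (\<gamma> Y2)" using tau_inv[OF s] canon by simp
  finally show ?thesis .
qed
lemma inner_move: "inner Y (\<Lambda> c u) \<le> inner (\<gamma> Y) (\<gamma> (\<Lambda> c u))" by (rule fan)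

lemma nonexp: "norm (\<gamma> X - \<gamma> Y) \<le> norm (X - Y)"
proof -
  have n: "inner (\<gamma> X) (\<gamma> X) = inner X X" "inner (\<gamma> Y) (\<gamma> Y) = inner Y Y"
    using norm_g[of X] norm_g[of Y] by (simp_all add: power2_norm_eq_inner[symmetric])
  have "(norm (\<gamma> X - \<gamma> Y))^2 = (norm X)^2 + (norm Y)^2 - 2 * inner (\<gamma> X) (\<gamma> Y)"
    using n by (simp add: power2_norm_eq_inner inner_diff_left inner_diff_right inner_commute)
  also have "\<dots> \<le> (norm X)^2 + (norm Y)^2 - 2 * inner X Y" using fan[of X Y] by simp
  also have "\<dots> = (norm (X - Y))^2"
    by (simp add: power2_norm_eq_inner inner_diff_left inner_diff_right inner_commute)
  finally have "(norm (\<gamma> X - \<gamma> Y))^2 \<le> (norm (X - Y))^2" .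
  thus ?thesis by (rule power2_le_imp_le) simp
qed

lemma sim:
  assumes eq: "inner X Y = inner (\<gamma> X) (\<gamma> Y)"
  shows "\<exists>a. X = \<Lambda> a (\<gamma> X) \<and> Y = \<Lambda> a (\<gamma> Y)"
proof -
  obtain a where a: "X + Y = \<Lambda> a (\<gamma> (X + Y))" using dec by blast
  have n2: "inner (\<gamma> Z) (\<gamma> Z) = inner Z Z" for Z using norm_g[of Z] by (simp add: power2_norm_eq_inner[symmetric])
  have add: "\<gamma> (X + Y) = \<gamma> X + \<gamma> Y"
  proof -
    define d where "d = \<gamma> (X + Y) - (\<gamma> X + \<gamma> Y)"
    have f1: "inner (X + Y) X \<le> inner (\<gamma> (X + Y)) (\<gamma> X)" "inner (X + Y) Y \<le> inner (\<gamma> (X + Y)) (\<gamma> Y)"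
      by (rule fan)+
    have exp: "inner d d = inner (\<gamma> (X + Y)) (\<gamma> (X + Y)) - 2 * inner (\<gamma> (X + Y)) (\<gamma> X)
        - 2 * inner (\<gamma> (X + Y)) (\<gamma> Y) + inner (\<gamma> X) (\<gamma> X) + 2 * inner (\<gamma> X) (\<gamma> Y) + inner (\<gamma> Y) (\<gamma> Y)"
      unfolding d_def by (simp add: inner_add_left inner_add_right inner_diff_left inner_diff_right inner_commute algebra_simps)
    have e2: "inner (X + Y) (X + Y) = inner X X + 2 * inner X Y + inner Y Y"
      by (simp add: inner_add_left inner_add_right inner_commute)
    have e3: "inner (X + Y) X = inner X X + inner X Y" "inner (X + Y) Y = inner X Y + inner Y Y"
      by (simp_all add: inner_add_left inner_add_right inner_commute)
    have "inner d d \<le> 0" using exp e2 e3 f1 n2[of "X+Y"] n2[of X] n2[of Y] eq by linarith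
    hence "inner d d = 0" using inner_ge_zero[of d] by linarith
    hence "d = 0" by simp
    thus ?thesis unfolding d_def by simp
  qed
  define P where "P = \<Lambda> a"
  from a have "X + Y = \<Lambda> a (\<gamma> X + \<gamma> Y)" by (simp only: add)
  hence XY: "X + Y = P (\<gamma> X) + P (\<gamma> Y)" using L_lin unfolding P_def by (simp add: linear_add)
  have c1: "inner X (P (\<gamma> X)) \<le> inner (\<gamma> X) (\<gamma> X)" using fan[of X "P (\<gamma> X)"] canon unfolding P_def by simp
  have c2: "inner Y (P (\<gamma> Y)) \<le> inner (\<gamma> Y) (\<gamma> Y)" using fan[of Y "P (\<gamma> Y)"] canon unfolding P_def by simp
  have c3: "inner X (P (\<gamma> Y)) \<le> inner (\<gamma> X) (\<gamma> Y)" using fan[of X "P (\<gamma> Y)"] canon unfolding P_def by simp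
  have c4: "inner Y (P (\<gamma> X)) \<le> inner (\<gamma> Y) (\<gamma> X)" using fan[of Y "P (\<gamma> X)"] canon unfolding P_def by simp
  have "inner (X + Y) (X + Y) = inner (X + Y) (P (\<gamma> X) + P (\<gamma> Y))" using XY by simp
  hence tot: "inner X X + inner Y Y + 2 * inner (\<gamma> X) (\<gamma> Y) =
      inner X (P (\<gamma> X)) + inner Y (P (\<gamma> Y)) + inner X (P (\<gamma> Y)) + inner Y (P (\<gamma> X))"
    using eq by (simp add: inner_add_left inner_add_right inner_commute)
  have c4': "inner Y (P (\<gamma> X)) \<le> inner (\<gamma> X) (\<gamma> Y)" using c4 by (simp add: inner_commute)
  have e1: "inner X (P (\<gamma> X)) = inner X X" using tot c1 c2 c3 c4' n2[of X] n2[of Y] by linarith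
  have e2: "inner Y (P (\<gamma> Y)) = inner Y Y" using tot c1 c2 c3 c4' n2[of X] n2[of Y] by linarith
  have pn: "inner (P v) (P v) = inner v v" for v unfolding P_def by (rule L_inner)
  have "inner (X - P (\<gamma> X)) (X - P (\<gamma> X)) = 0"
    using e1 pn[of "\<gamma> X"] n2[of X] by (simp add: inner_diff_left inner_diff_right inner_commute)
  hence "X - P (\<gamma> X) = 0" by (simp only: inner_eq_zero_iff)
  hence d1: "X = \<Lambda> a (\<gamma> X)" unfolding P_def by (simp only: right_minus_eq)
  have "inner (Y - P (\<gamma> Y)) (Y - P (\<gamma> Y)) = 0"
    using e2 pn[of "\<gamma> Y"] n2[of Y] by (simp add: inner_diff_left inner_diff_right inner_commute)
  hence "Y - P (\<gamma> Y) = 0" by (simp only: inner_eq_zero_iff)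
  hence d2: "Y = \<Lambda> a (\<gamma> Y)" unfolding P_def by (simp only: right_minus_eq)
  show ?thesis by (intro exI[of _ a] conjI d1 d2)
qed

lemma orbit_norm: "p \<in> orbit S w \<Longrightarrow> norm p = norm w"
  unfolding orbit_def using S_iso by auto

lemma orbit_closed: "closed (orbit S w)"
proof -
  have "closure (orbit S w) \<subseteq> orbit S w"
  proof
    fix p assume p: "p \<in> closure (orbit S w)"
    fix a
    have "\<gamma> (\<Lambda> a p) = \<gamma> (\<Lambda> a w)"
    proof (rule ccontr)
      assume ne: "\<gamma> (\<Lambda> a p) \<noteq> \<gamma> (\<Lambda> a w)"
      hence "norm (\<gamma> (\<Lambda> a p) - \<gamma> (\<Lambda> a w)) > 0" by simp
      then obtain q where q: "q \<in> orbit S w" "dist q p < norm (\<gamma> (\<Lambda> a p) - \<gamma> (\<Lambda> a w))"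
        using p unfolding closure_approachable by blast
      obtain s where s: "s \<in> S" "q = s w" using q(1) unfolding orbit_def by blast
      have "\<gamma> (\<Lambda> a q) = \<gamma> (\<Lambda> a w)" using tau_inv[OF s(1)] s(2) by simp
      moreover have "norm (\<gamma> (\<Lambda> a p) - \<gamma> (\<Lambda> a q)) \<le> norm (\<Lambda> a p - \<Lambda> a q)" by (rule nonexp)
      moreover have "norm (\<Lambda> a p - \<Lambda> a q) = dist q p" by (simp add: L_diff L_iso dist_norm norm_minus_commute)
      ultimately show False using q(2) by simp
    qed
    obtain s1 where s1: "s1 \<in> S" "\<gamma> (\<Lambda> a p) = s1 p" using tau_orb by blast
    obtain s2 where s2: "s2 \<in> S" "\<gamma> (\<Lambda> a w) = s2 w" using tau_orb by blast
    obtain s1' where s1': "s1' \<in> S" "\<And>z. s1' (s1 z) = z" using S_inv[OF s1(1)] by blast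
    have "s1 p = s2 w" using s1(2) s2(2) \<open>\<gamma> (\<Lambda> a p) = \<gamma> (\<Lambda> a w)\<close> by simp
    hence "s1' (s1 p) = s1' (s2 w)" by simp
    hence "p = s1' (s2 w)" using s1'(2) by simp
    moreover have "(\<lambda>z. s1' (s2 z)) \<in> S" by (rule S_comp[OF s1'(1) s2(1)])
    ultimately show "p \<in> orbit S w" unfolding orbit_def by (auto intro!: exI[of _ "\<lambda>z. s1' (s2 z)"])
  qed
  thus ?thesis using closure_subset_eq by blast
qed

lemma orbit_compact: "compact (orbit S w)"
proof -
  have "bounded (orbit S w)" unfolding bounded_iff using orbit_norm by auto
  thus ?thesis using orbit_closed by (simp add: compact_eq_bounded_closed)
qed

lemma maj:
  assumes t: "0 \<le> t" "t \<le> 1"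
  shows "\<gamma> ((1 - t) *\<^sub>R Y1 + t *\<^sub>R Y2) \<in> convex hull (orbit S ((1 - t) *\<^sub>R \<gamma> Y1 + t *\<^sub>R \<gamma> Y2))"
proof (rule ccontr)
  define M where "M = (1 - t) *\<^sub>R Y1 + t *\<^sub>R Y2"
  define w where "w = (1 - t) *\<^sub>R \<gamma> Y1 + t *\<^sub>R \<gamma> Y2"
  define H where "H = convex hull (orbit S w)"
  assume "\<gamma> ((1 - t) *\<^sub>R Y1 + t *\<^sub>R Y2) \<notin> convex hull (orbit S ((1 - t) *\<^sub>R \<gamma> Y1 + t *\<^sub>R \<gamma> Y2))"
  hence nH: "\<gamma> M \<notin> H" unfolding M_def w_def H_def .
  have cH: "compact H" unfolding H_def by (rule compact_convex_hull[OF orbit_compact])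
  obtain a b where ab: "inner a (\<gamma> M) < b" "\<forall>p\<in>H. inner a p > b"
    using separating_hyperplane_closed_point[OF convex_convex_hull _ nH[unfolded H_def]] cH
    unfolding H_def by (meson compact_imp_closed)
  define u where "u = - a"
  obtain c where c: "M = \<Lambda> c (\<gamma> M)" using dec by blast
  obtain s where s: "s \<in> S" "\<gamma> (\<Lambda> c u) = s u" using tau_orb by blast
  obtain s' where s': "s' \<in> S" "\<And>z. s' (s z) = z" "\<And>z. s (s' z) = z" using S_inv[OF s(1)] by blast
  have "inner (\<gamma> M) u = inner (\<Lambda> c (\<gamma> M)) (\<Lambda> c u)" by (rule L_inner[symmetric])
  also have "\<dots> = inner M (\<Lambda> c u)" by (subst (2) c) (rule refl)
  also have "\<dots> = (1 - t) * inner Y1 (\<Lambda> c u) + t * inner Y2 (\<Lambda> c u)"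
    unfolding M_def by (simp add: inner_add_left)
  also have "\<dots> \<le> (1 - t) * inner (\<gamma> Y1) (s u) + t * inner (\<gamma> Y2) (s u)"
    using fan[of Y1 "\<Lambda> c u"] fan[of Y2 "\<Lambda> c u"] s(2) t
    by (intro add_mono mult_left_mono) auto
  also have "\<dots> = inner w (s u)" unfolding w_def by (simp add: inner_add_left)
  also have "\<dots> = inner (s' w) u" using S_inner[OF s'(1), of w "s u"] s'(2) by simp
  finally have le: "inner (\<gamma> M) u \<le> inner (s' w) u" .
  have "s' w \<in> orbit S w" using s'(1) unfolding orbit_def by blast
  hence "s' w \<in> H" unfolding H_def by (rule hull_inc)
  hence "inner a (s' w) > b" using ab(2) by blast
  with ab(1) le show False unfolding u_def by (simp add: inner_commute)
qed

lemma sub_lift: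
  assumes inv: "S_invariant S \<psi>" and u: "u \<in> subdiff \<psi> (\<gamma> Y)" and b: "Y = \<Lambda> b (\<gamma> Y)"
  shows "\<Lambda> b u \<in> subdiff (\<psi> \<circ> \<gamma>) Y"
  unfolding subdiff_def
proof safe
  fix Z
  obtain s where s: "s \<in> S" "\<gamma> (\<Lambda> b u) = s u" using tau_orb by blast
  obtain s' where s': "s' \<in> S" "\<And>z. s' (s z) = z" "\<And>z. s (s' z) = z" using S_inv[OF s(1)] by blast
  have "ereal (inner (s' (\<gamma> Z) - \<gamma> Y) u) + \<psi> (\<gamma> Y) \<le> \<psi> (s' (\<gamma> Z))"
    using u unfolding subdiff_def by blast
  also have "\<psi> (s' (\<gamma> Z)) = \<psi> (\<gamma> Z)" using inv s'(1) unfolding S_invariant_def by blast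
  finally have A: "ereal (inner (s' (\<gamma> Z) - \<gamma> Y) u) + \<psi> (\<gamma> Y) \<le> \<psi> (\<gamma> Z)" .
  have "inner Z (\<Lambda> b u) \<le> inner (\<gamma> Z) (s u)" using fan[of Z "\<Lambda> b u"] s(2) by simp
  also have "\<dots> = inner (s' (\<gamma> Z)) u" using S_inner[OF s'(1), of "\<gamma> Z" "s u"] s'(2) by simp
  finally have B1: "inner Z (\<Lambda> b u) \<le> inner (s' (\<gamma> Z)) u" .
  have B2: "inner Y (\<Lambda> b u) = inner (\<gamma> Y) u" by (subst (1) b) (rule L_inner)
  have "inner (Z - Y) (\<Lambda> b u) \<le> inner (s' (\<gamma> Z) - \<gamma> Y) u"
    using B1 B2 by (simp add: inner_diff_left)
  hence "ereal (inner (Z - Y) (\<Lambda> b u)) + \<psi> (\<gamma> Y) \<le> ereal (inner (s' (\<gamma> Z) - \<gamma> Y) u) + \<psi> (\<gamma> Y)"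
    by (intro add_right_mono) simp
  with A show "ereal (inner (Z - Y) (\<Lambda> b u)) + (\<psi> \<circ> \<gamma>) Y \<le> (\<psi> \<circ> \<gamma>) Z" by simp
qed

lemma sub_down:
  assumes inv: "S_invariant S \<psi>" and G: "G' \<in> subdiff (\<psi> \<circ> \<gamma>) X"
  shows "\<gamma> G' \<in> subdiff \<psi> (\<gamma> X)"
  unfolding subdiff_def
proof safe
  fix y
  obtain c where c: "G' = \<Lambda> c (\<gamma> G')" using dec by blast
  have "ereal (inner (\<Lambda> c y - X) G') + \<psi> (\<gamma> X) \<le> \<psi> (\<gamma> (\<Lambda> c y))"
    using G unfolding subdiff_def by auto
  also have "\<psi> (\<gamma> (\<Lambda> c y)) = \<psi> y" by (rule inv_f[OF inv])
  finally have A: "ereal (inner (\<Lambda> c y - X) G') + \<psi> (\<gamma> X) \<le> \<psi> y" .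
  have "inner (\<Lambda> c y) G' = inner y (\<gamma> G')" by (subst (1) c) (rule L_inner)
  moreover have "inner X G' \<le> inner (\<gamma> X) (\<gamma> G')" by (rule fan)
  ultimately have "inner (y - \<gamma> X) (\<gamma> G') \<le> inner (\<Lambda> c y - X) G'"
    by (simp add: inner_diff_left)
  hence "ereal (inner (y - \<gamma> X) (\<gamma> G')) + \<psi> (\<gamma> X) \<le> ereal (inner (\<Lambda> c y - X) G') + \<psi> (\<gamma> X)"
    by (intro add_right_mono) simp
  with A show "ereal (inner (y - \<gamma> X) (\<gamma> G')) + \<psi> (\<gamma> X) \<le> \<psi> y" by simp
qed

end

lemma egrad_eq:
  assumes "((\<lambda>y. real_of_ereal (f y)) has_derivative (\<lambda>h. inner G h)) (at x)"
  shows "egrad f x = G"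
  unfolding egrad_def
proof (rule the_equality)
  show "((\<lambda>y. real_of_ereal (f y)) has_derivative (\<lambda>h. inner G h)) (at x)" by (rule assms)
next
  fix u assume "((\<lambda>y. real_of_ereal (f y)) has_derivative (\<lambda>h. inner u h)) (at x)"
  from has_derivative_unique[OF this assms] have "(\<lambda>h. inner u h) = (\<lambda>h. inner G h)" .
  hence "inner u (u - G) = inner G (u - G)" by metis
  hence "inner (u - G) (u - G) = 0" by (simp add: inner_diff_left)
  thus "u = G" by simp
qed

lemma subdiff_mid:
  assumes fx: "f x = ereal c" and u: "u \<in> subdiff f x" and v: "v \<in> subdiff f x"
  shows "(1/2) *\<^sub>R (u + v) \<in> subdiff f x"
  unfolding subdiff_def
proof safe
  fix z
  show "ereal (inner (z - x) ((1/2) *\<^sub>R (u + v))) + f x \<le> f z"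
  proof (cases "f z")
    case (real b)
    have "inner (z - x) u + c \<le> b" "inner (z - x) v + c \<le> b"
      using subdiff_real[OF u fx real] subdiff_real[OF v fx real] by auto
    hence "inner (z - x) ((1/2) *\<^sub>R (u + v)) + c \<le> b" by (simp add: inner_add_right field_simps)
    thus ?thesis using fx real by simp
  next
    case PInf thus ?thesis by simp
  next
    case MInf
    have "ereal (inner (z - x) u) + f x \<le> f z" using u unfolding subdiff_def by blast
    thus ?thesis using MInf fx by simp
  qed
qed

lemma argmin_alt:
  "Argmin f = {y. (INF z. f z) < \<infinity> \<and> f y \<le> (INF z. f z)}"
  unfolding Argmin_def by (auto simp: le_INF_iff)

lemma vmono:
  fixes A B :: ereal
  assumes "A \<noteq> -\<infinity>" "B \<noteq> -\<infinity>" "p \<le> q"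
  shows "A + (B - ereal r - ereal q) \<le> A + (B - ereal r - ereal p)"
  using assms by (cases A; cases B) auto

lemma vstrict:
  fixes A B :: ereal
  assumes "A \<noteq> -\<infinity>" "B \<noteq> -\<infinity>" "A + (B - ereal r - ereal q) < \<infinity>"
    and "A + (B - ereal r - ereal p) \<le> A + (B - ereal r - ereal q)"
  shows "q \<le> p"
  using assms by (cases A; cases B) auto

locale spec = sdsys S \<gamma> \<Lambda> for S :: "('x::euclidean_space \<Rightarrow> 'x) set" and \<gamma> :: "'h::euclidean_space \<Rightarrow> 'x"
    and \<Lambda> :: "'i \<Rightarrow> 'x \<Rightarrow> 'h" +
  fixes \<phi> \<psi> :: "'x \<Rightarrow> ereal"
  assumes phi_proper: "eproper \<phi>" and phi_inv: "S_invariant S \<phi>"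
    and psi_Gamma0: "Gamma0 \<psi>" and psi_inv: "S_invariant S \<psi>" and psi_Leg: "Legendre \<psi>"
begin

lemma phi_nm: "\<phi> y \<noteq> -\<infinity>" using phi_proper unfolding eproper_def by blast
lemma psi_nm: "\<psi> y \<noteq> -\<infinity>" using psi_Gamma0 unfolding Gamma0_def eproper_def by blast
lemma psi_cvx: "econvex \<psi>" using psi_Gamma0 unfolding Gamma0_def by blast
lemma psi_uniq: "u \<in> subdiff \<psi> y \<Longrightarrow> v \<in> subdiff \<psi> y \<Longrightarrow> u = v"
  using psi_Leg unfolding Legendre_def essentially_smooth_def by blast
lemma S_inv_f: "S_invariant S f \<Longrightarrow> s \<in> S \<Longrightarrow> f (s z) = f z"
  unfolding S_invariant_def by blast

lemma int_dom: "X \<in> interior (edom (\<psi> \<circ> \<gamma>)) \<Longrightarrow> \<gamma> X \<in> interior (edom \<psi>)"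
proof -
  assume "X \<in> interior (edom (\<psi> \<circ> \<gamma>))"
  then obtain e where e: "e > 0" "ball X e \<subseteq> edom (\<psi> \<circ> \<gamma>)" using mem_interior by blast
  obtain a where a: "X = \<Lambda> a (\<gamma> X)" using dec by blast
  have "ball (\<gamma> X) e \<subseteq> edom \<psi>"
  proof
    fix y assume y: "y \<in> ball (\<gamma> X) e"
    have "\<Lambda> a y - X = \<Lambda> a y - \<Lambda> a (\<gamma> X)" using a by (rule arg_cong[where f="\<lambda>t. \<Lambda> a y - t"])
    also have "\<dots> = \<Lambda> a (y - \<gamma> X)" by (rule L_diff)
    finally have "dist (\<Lambda> a y) X = dist y (\<gamma> X)" by (simp add: dist_norm L_iso)
    hence "\<Lambda> a y \<in> ball X e" using y by (simp add: dist_commute)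
    hence "(\<psi> \<circ> \<gamma>) (\<Lambda> a y) < \<infinity>" using e(2) unfolding edom_def by blast
    thus "y \<in> edom \<psi>" using inv_f[OF psi_inv] unfolding edom_def by simp
  qed
  thus ?thesis using e(1) mem_interior by blast
qed

lemma prep:
  assumes xi: "\<gamma> X \<in> interior (edom \<psi>)"
  shows "subdiff \<psi> (\<gamma> X) = {egrad \<psi> (\<gamma> X)}"
    and "subdiff (\<psi> \<circ> \<gamma>) X = {egrad (\<psi> \<circ> \<gamma>) X}"
    and "\<And>a. X = \<Lambda> a (\<gamma> X) \<Longrightarrow> \<Lambda> a (egrad \<psi> (\<gamma> X)) = egrad (\<psi> \<circ> \<gamma>) X"
    and "\<gamma> (egrad (\<psi> \<circ> \<gamma>) X) = egrad \<psi> (\<gamma> X)"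
    and "X \<in> interior (edom (\<psi> \<circ> \<gamma>))"
    and "\<psi> (\<gamma> X) = ereal (real_of_ereal (\<psi> (\<gamma> X)))"
proof -
  define x where "x = \<gamma> X"
  have xi': "x \<in> interior (edom \<psi>)" using xi unfolding x_def .
  obtain g where g: "g \<in> subdiff \<psi> x" using subgrad_exists[OF psi_cvx psi_nm xi'] by blast
  have sg: "subdiff \<psi> x = {g}" using g psi_uniq by blast
  obtain r K where rK: "r > 0" "ball x r \<subseteq> interior (edom \<psi>)" "\<And>y. y \<in> ball x r \<Longrightarrow> \<exists>u\<in>subdiff \<psi> y. norm u \<le> K"
    using local_bounded_subgrad[OF psi_cvx psi_nm xi'] by blast
  have finp: "\<psi> y = ereal (real_of_ereal (\<psi> y))" if "y \<in> ball x r" for y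
    using edom_fin[of y \<psi>] psi_nm that rK(2) interior_subset by blast
  have "((\<lambda>y. real_of_ereal (\<psi> y)) has_derivative (\<lambda>h. inner g h)) (at x)"
    by (rule diff_from_subgrad[OF rK(1) finp rK(3) g]) (use sg in auto)
  hence eg: "egrad \<psi> x = g" by (rule egrad_eq)
  show "subdiff \<psi> (\<gamma> X) = {egrad \<psi> (\<gamma> X)}" using sg eg unfolding x_def by simp
  have fx: "\<psi> x = ereal (real_of_ereal (\<psi> x))" using finp rK(1) by simp
  thus "\<psi> (\<gamma> X) = ereal (real_of_ereal (\<psi> (\<gamma> X)))" unfolding x_def .
  obtain a0 where a0: "X = \<Lambda> a0 (\<gamma> X)" using dec by blast
  have g': "g \<in> subdiff \<psi> (\<gamma> X)" using g unfolding x_def .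
  define G where "G = \<Lambda> a0 g"
  have G: "G \<in> subdiff (\<psi> \<circ> \<gamma>) X" unfolding G_def
    by (rule sub_lift[OF psi_inv g' a0])
  have down: "\<gamma> G' = g" if "G' \<in> subdiff (\<psi> \<circ> \<gamma>) X" for G'
    using sub_down[OF psi_inv that] sg unfolding x_def by blast
  have uniqF: "G1 = G2" if "G1 \<in> subdiff (\<psi> \<circ> \<gamma>) X" "G2 \<in> subdiff (\<psi> \<circ> \<gamma>) X" for G1 G2
  proof -
    have FX: "(\<psi> \<circ> \<gamma>) X = ereal (real_of_ereal (\<psi> x))" using fx unfolding x_def by simp
    have m: "(1/2) *\<^sub>R (G1 + G2) \<in> subdiff (\<psi> \<circ> \<gamma>) X" by (rule subdiff_mid[OF FX that])
    show ?thesis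
    proof (rule par_eq)
      show "norm G1 = norm g" using down[OF that(1)] norm_g[of G1] by simp
      show "norm G2 = norm g" using down[OF that(2)] norm_g[of G2] by simp
      show "norm ((1/2) *\<^sub>R (G1 + G2)) = norm g" using down[OF m] norm_g[of "(1/2) *\<^sub>R (G1 + G2)"] by simp
    qed
  qed
  have sF: "subdiff (\<psi> \<circ> \<gamma>) X = {G}" using G uniqF by blast
  have finF: "(\<psi> \<circ> \<gamma>) Y = ereal (real_of_ereal ((\<psi> \<circ> \<gamma>) Y))" and subF: "\<exists>u\<in>subdiff (\<psi> \<circ> \<gamma>) Y. norm u \<le> K"
    if Y: "Y \<in> ball X r" for Y
  proof -
    have "norm (\<gamma> Y - \<gamma> X) \<le> norm (Y - X)" by (rule nonexp)
    hence yb: "\<gamma> Y \<in> ball x r" using Y unfolding x_def by (simp add: dist_norm norm_minus_commute)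
    show "(\<psi> \<circ> \<gamma>) Y = ereal (real_of_ereal ((\<psi> \<circ> \<gamma>) Y))" using finp[OF yb] by simp
    obtain u where u: "u \<in> subdiff \<psi> (\<gamma> Y)" "norm u \<le> K" using rK(3)[OF yb] by blast
    obtain b where b: "Y = \<Lambda> b (\<gamma> Y)" using dec by blast
    have "\<Lambda> b u \<in> subdiff (\<psi> \<circ> \<gamma>) Y" by (rule sub_lift[OF psi_inv u(1) b])
    moreover have "norm (\<Lambda> b u) \<le> K" using u(2) L_iso by simp
    ultimately show "\<exists>u\<in>subdiff (\<psi> \<circ> \<gamma>) Y. norm u \<le> K" by blast
  qed
  have "((\<lambda>y. real_of_ereal ((\<psi> \<circ> \<gamma>) y)) has_derivative (\<lambda>h. inner G h)) (at X)"
    by (rule diff_from_subgrad[OF rK(1) finF subF G]) (use sF in auto)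
  hence egF: "egrad (\<psi> \<circ> \<gamma>) X = G" by (rule egrad_eq)
  show "subdiff (\<psi> \<circ> \<gamma>) X = {egrad (\<psi> \<circ> \<gamma>) X}" using sF egF by simp
  show "\<Lambda> a (egrad \<psi> (\<gamma> X)) = egrad (\<psi> \<circ> \<gamma>) X" if "X = \<Lambda> a (\<gamma> X)" for a
  proof -
    have "\<Lambda> a g \<in> subdiff (\<psi> \<circ> \<gamma>) X" by (rule sub_lift[OF psi_inv g' that])
    thus ?thesis using sF egF eg unfolding x_def by simp
  qed
  show "\<gamma> (egrad (\<psi> \<circ> \<gamma>) X) = egrad \<psi> (\<gamma> X)" using down[OF G] egF eg unfolding x_def by simp
  have "ball X r \<subseteq> edom (\<psi> \<circ> \<gamma>)"
  proof
    fix Y assume "Y \<in> ball X r"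
    thus "Y \<in> edom (\<psi> \<circ> \<gamma>)" using finF[of Y] unfolding edom_def by (metis less_ereal.simps(4) mem_Collect_eq)
  qed
  thus "X \<in> interior (edom (\<psi> \<circ> \<gamma>))" using rK(1) mem_interior by blast
qed

end

locale specX = spec +
  fixes X :: "'h::euclidean_space"
  assumes xi: "\<gamma> X \<in> interior (edom \<psi>)"
begin

abbreviation "gx \<equiv> egrad \<psi> (\<gamma> X)"
abbreviation "GX \<equiv> egrad (\<psi> \<circ> \<gamma>) X"
abbreviation "r0 \<equiv> real_of_ereal (\<psi> (\<gamma> X))"
abbreviation "hh y \<equiv> \<phi> y + bregman \<psi> y (\<gamma> X)"
abbreviation "HH Y \<equiv> (\<phi> \<circ> \<gamma>) Y + bregman (\<psi> \<circ> \<gamma>) Y X"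
abbreviation "mm \<equiv> (INF y. hh y)"

lemmas pr = prep[OF xi]

lemma sg: "subdiff \<psi> (\<gamma> X) = {gx}" by (rule pr(1))
lemma gsub: "gx \<in> subdiff \<psi> (\<gamma> X)" using sg by simp
lemma lamG: "X = \<Lambda> a (\<gamma> X) \<Longrightarrow> \<Lambda> a gx = GX" by (rule pr(3))
lemma gG: "\<gamma> GX = gx" by (rule pr(4))
lemma XiF: "X \<in> interior (edom (\<psi> \<circ> \<gamma>))" by (rule pr(5))
lemma fx: "\<psi> (\<gamma> X) = ereal r0" by (rule pr(6))

lemma hf: "hh y = \<phi> y + (\<psi> y - ereal r0 - ereal (inner (y - \<gamma> X) gx))"
  unfolding bregman_def using xi fx by simp
lemma Hf: "HH Y = \<phi> (\<gamma> Y) + (\<psi> (\<gamma> Y) - ereal r0 - ereal (inner (Y - X) GX))"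
  unfolding bregman_def using XiF fx by simp

lemma iXG: "inner X GX = inner (\<gamma> X) gx"
proof -
  obtain a where a: "X = \<Lambda> a (\<gamma> X)" using dec by blast
  have "inner X GX = inner (\<Lambda> a (\<gamma> X)) (\<Lambda> a gx)"
    using arg_cong2[where f=inner, OF a lamG[OF a, symmetric]] .
  thus ?thesis using L_inner by simp
qed

lemma innerle: "inner Y GX \<le> inner (\<gamma> Y) gx"
  using fan[of Y GX] gG by simp

lemma P2: "hh (\<gamma> Y) \<le> HH Y"
proof -
  have "inner (Y - X) GX \<le> inner (\<gamma> Y - \<gamma> X) gx"
    using innerle[of Y] iXG by (simp add: inner_diff_left)
  thus ?thesis unfolding hf Hf by (rule vmono[OF phi_nm psi_nm])
qed

lemma P1: assumes a: "X = \<Lambda> a (\<gamma> X)" shows "HH (\<Lambda> a z) = hh z"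
proof -
  have "\<Lambda> a z - X = \<Lambda> a z - \<Lambda> a (\<gamma> X)" using a by (rule arg_cong[where f="\<lambda>t. \<Lambda> a z - t"])
  also have "\<dots> = \<Lambda> a (z - \<gamma> X)" by (rule L_diff)
  finally have "inner (\<Lambda> a z - X) GX = inner (\<Lambda> a (z - \<gamma> X)) (\<Lambda> a gx)" using lamG[OF a] by simp
  hence i: "inner (\<Lambda> a z - X) GX = inner (z - \<gamma> X) gx" using L_inner by simp
  show ?thesis unfolding hf Hf i using inv_f[OF phi_inv] inv_f[OF psi_inv] by simp
qed

lemma P4: assumes "inner Y GX = inner (\<gamma> Y) gx" shows "HH Y = hh (\<gamma> Y)"
proof -
  have "inner (Y - X) GX = inner (\<gamma> Y - \<gamma> X) gx" using assms iXG by (simp add: inner_diff_left)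
  thus ?thesis unfolding hf Hf by simp
qed

lemma P3: assumes "hh (\<gamma> Y) < \<infinity>" "HH Y \<le> hh (\<gamma> Y)" shows "inner Y GX = inner (\<gamma> Y) gx"
proof -
  have "inner (\<gamma> Y - \<gamma> X) gx \<le> inner (Y - X) GX"
    by (rule vstrict[OF phi_nm psi_nm]) (use assms in \<open>simp only: hf Hf\<close>)+
  hence "inner (\<gamma> Y) gx \<le> inner Y GX" using iXG by (simp add: inner_diff_left)
  thus ?thesis using innerle[of Y] by simp
qed

lemma infeq: "(INF Y. HH Y) = mm"
proof (rule antisym)
  obtain a0 where a0: "X = \<Lambda> a0 (\<gamma> X)" using dec by blast
  show "(INF Y. HH Y) \<le> mm"
    by (rule INF_mono) (use P1[OF a0] in \<open>metis UNIV_I order_refl\<close>)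
  show "mm \<le> (INF Y. HH Y)"
    by (rule INF_mono) (use P2 in blast)
qed

lemma memP: "z \<in> Prox \<phi> \<psi> (\<gamma> X) \<longleftrightarrow> mm < \<infinity> \<and> hh z \<le> mm"
  unfolding Prox_def argmin_alt by simp
lemma memF: "Z \<in> Prox (\<phi> \<circ> \<gamma>) (\<psi> \<circ> \<gamma>) X \<longleftrightarrow> mm < \<infinity> \<and> HH Z \<le> mm"
  unfolding Prox_def argmin_alt infeq[symmetric] by simp
lemma hge: "mm \<le> hh y" by (rule INF_lower) simp

lemma orb_strict:
  assumes s: "s \<in> S" and e: "inner (s (\<gamma> X)) gx = inner (\<gamma> X) gx"
  shows "s (\<gamma> X) = \<gamma> X"
proof -
  have ps: "\<psi> (s (\<gamma> X)) = ereal r0" using S_inv_f[OF psi_inv s] fx by simp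
  have "gx \<in> subdiff \<psi> (s (\<gamma> X))"
    unfolding subdiff_def
  proof safe
    fix z
    have "ereal (inner (z - \<gamma> X) gx) + \<psi> (\<gamma> X) \<le> \<psi> z" using gsub unfolding subdiff_def by blast
    moreover have "inner (z - s (\<gamma> X)) gx = inner (z - \<gamma> X) gx" using e by (simp add: inner_diff_left)
    ultimately show "ereal (inner (z - s (\<gamma> X)) gx) + \<psi> (s (\<gamma> X)) \<le> \<psi> z" using ps fx by simp
  qed
  from strict_same[OF psi_Leg gsub this fx ps] show ?thesis by simp
qed

lemma INJ:
  assumes b: "GX = \<Lambda> b gx"
  shows "\<Lambda> b (\<gamma> X) = X"
proof -
  define X' where "X' = \<Lambda> b (\<gamma> X)"
  have gX': "\<gamma> X' = \<gamma> X" unfolding X'_def by (rule canon)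
  have iX'G: "inner X' GX = inner (\<gamma> X) gx" unfolding X'_def b by (rule L_inner)
  define M where "M = (1 - 1/2) *\<^sub>R X + (1/2) *\<^sub>R X'"
  have weq: "(1 - 1/2) *\<^sub>R \<gamma> X + (1/2::real) *\<^sub>R \<gamma> X' = \<gamma> X"
    unfolding gX' by (simp add: scaleR_left_distrib[symmetric])
  have hull: "\<gamma> M \<in> convex hull (orbit S (\<gamma> X))"
    using maj[of "1/2" X X'] weq unfolding M_def by simp
  have "inner M GX = inner (\<gamma> X) gx" unfolding M_def using iXG iX'G
    by (simp add: inner_add_left algebra_simps)
  hence ge: "inner (\<gamma> M) gx \<ge> inner (\<gamma> X) gx" using innerle[of M] by simp
  have "\<gamma> M \<in> {\<gamma> X}"
  proof (rule face_lemma[OF hull _ ge convex_singleton])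
    fix p assume "p \<in> orbit S (\<gamma> X)"
    then obtain s where s: "s \<in> S" "p = s (\<gamma> X)" unfolding orbit_def by blast
    show "inner p gx \<le> inner (\<gamma> X) gx" using align[OF s(1), of X GX] gG s(2) by simp
  next
    fix p assume "p \<in> orbit S (\<gamma> X)" "inner p gx = inner (\<gamma> X) gx"
    then obtain s where s: "s \<in> S" "p = s (\<gamma> X)" "inner (s (\<gamma> X)) gx = inner (\<gamma> X) gx"
      unfolding orbit_def by blast
    show "p \<in> {\<gamma> X}" using orb_strict[OF s(1) s(3)] s(2) by simp
  qed
  hence gM: "\<gamma> M = \<gamma> X" by simp
  have "X = X'"
  proof (rule par_eq)
    show "norm X = norm (\<gamma> X)" using norm_g[of X] by simp
    show "norm X' = norm (\<gamma> X)" using norm_g[of X'] gX' by simp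
    have "(1/2) *\<^sub>R (X + X') = M" unfolding M_def by (simp add: scaleR_add_right)
    thus "norm ((1/2) *\<^sub>R (X + X')) = norm (\<gamma> X)" using norm_g[of M] gM by simp
  qed
  thus ?thesis unfolding X'_def by simp
qed

lemma PFD:
  assumes Z: "Z \<in> Prox (\<phi> \<circ> \<gamma>) (\<psi> \<circ> \<gamma>) X"
  shows "\<gamma> Z \<in> Prox \<phi> \<psi> (\<gamma> X)" and "inner Z GX = inner (\<gamma> Z) gx"
    and "\<exists>a. X = \<Lambda> a (\<gamma> X) \<and> Z = \<Lambda> a (\<gamma> Z)"
proof -
  have m: "mm < \<infinity>" "HH Z \<le> mm" using Z memF by auto
  have h1: "hh (\<gamma> Z) \<le> mm" using P2[of Z] m(2) by (rule order_trans)
  thus "\<gamma> Z \<in> Prox \<phi> \<psi> (\<gamma> X)" using memP m(1) by simp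
  have "hh (\<gamma> Z) < \<infinity>" using h1 m(1) by (rule le_less_trans)
  moreover have "HH Z \<le> hh (\<gamma> Z)" using m(2) hge by (rule order_trans)
  ultimately show ie: "inner Z GX = inner (\<gamma> Z) gx" by (rule P3)
  hence "inner Z GX = inner (\<gamma> Z) (\<gamma> GX)" using gG by simp
  then obtain b where b: "Z = \<Lambda> b (\<gamma> Z)" "GX = \<Lambda> b (\<gamma> GX)" using sim by blast
  have "GX = \<Lambda> b gx" using b(2) gG by simp
  hence "\<Lambda> b (\<gamma> X) = X" by (rule INJ)
  thus "\<exists>a. X = \<Lambda> a (\<gamma> X) \<and> Z = \<Lambda> a (\<gamma> Z)" using b(1) by metis
qed

lemma PFI:
  assumes "\<gamma> Z \<in> Prox \<phi> \<psi> (\<gamma> X)" "X = \<Lambda> a (\<gamma> X)" "Z = \<Lambda> a (\<gamma> Z)"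
  shows "Z \<in> Prox (\<phi> \<circ> \<gamma>) (\<psi> \<circ> \<gamma>) X"
proof -
  have "HH Z = HH (\<Lambda> a (\<gamma> Z))" using assms(3) by (rule arg_cong)
  also have "\<dots> = hh (\<gamma> Z)" by (rule P1[OF assms(2)])
  finally show ?thesis using assms(1) memP memF by simp
qed

lemma part3: "X = \<Lambda> a (\<gamma> X) \<Longrightarrow> \<Lambda> a z \<in> Prox (\<phi> \<circ> \<gamma>) (\<psi> \<circ> \<gamma>) X \<longleftrightarrow> z \<in> Prox \<phi> \<psi> (\<gamma> X)"
  using P1 memP memF by simp

end

context specX
begin

lemma part4: "Prox (\<phi> \<circ> \<gamma>) (\<psi> \<circ> \<gamma>) X = {\<Lambda> a z | z a. z \<in> Prox \<phi> \<psi> (\<gamma> X) \<and> a \<in> Aset \<gamma> \<Lambda> X}"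
proof (rule set_eqI, rule iffI)
  fix Z assume Z: "Z \<in> Prox (\<phi> \<circ> \<gamma>) (\<psi> \<circ> \<gamma>) X"
  obtain a where a: "X = \<Lambda> a (\<gamma> X)" "Z = \<Lambda> a (\<gamma> Z)" using PFD(3)[OF Z] by blast
  have "\<gamma> Z \<in> Prox \<phi> \<psi> (\<gamma> X)" by (rule PFD(1)[OF Z])
  moreover have "a \<in> Aset \<gamma> \<Lambda> X" using a(1) unfolding Aset_def by simp
  ultimately show "Z \<in> {\<Lambda> a z | z a. z \<in> Prox \<phi> \<psi> (\<gamma> X) \<and> a \<in> Aset \<gamma> \<Lambda> X}" using a(2) by blast
next
  fix Z assume "Z \<in> {\<Lambda> a z | z a. z \<in> Prox \<phi> \<psi> (\<gamma> X) \<and> a \<in> Aset \<gamma> \<Lambda> X}"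
  then obtain a z where az: "Z = \<Lambda> a z" "z \<in> Prox \<phi> \<psi> (\<gamma> X)" "X = \<Lambda> a (\<gamma> X)"
    unfolding Aset_def by blast
  show "Z \<in> Prox (\<phi> \<circ> \<gamma>) (\<psi> \<circ> \<gamma>) X" using part3[OF az(3)] az(1,2) by simp
qed

lemma part5: "convex (Prox (\<phi> \<circ> \<gamma>) (\<psi> \<circ> \<gamma>) X) \<longleftrightarrow> convex (Prox \<phi> \<psi> (\<gamma> X))"
proof
  assume cF: "convex (Prox (\<phi> \<circ> \<gamma>) (\<psi> \<circ> \<gamma>) X)"
  obtain a0 where a0: "X = \<Lambda> a0 (\<gamma> X)" using dec by blast
  show "convex (Prox \<phi> \<psi> (\<gamma> X))"
  proof (rule convexI)
    fix z1 z2 and u v :: real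
    assume z: "z1 \<in> Prox \<phi> \<psi> (\<gamma> X)" "z2 \<in> Prox \<phi> \<psi> (\<gamma> X)" and uv: "0 \<le> u" "0 \<le> v" "u + v = 1"
    have "\<Lambda> a0 z1 \<in> Prox (\<phi> \<circ> \<gamma>) (\<psi> \<circ> \<gamma>) X" "\<Lambda> a0 z2 \<in> Prox (\<phi> \<circ> \<gamma>) (\<psi> \<circ> \<gamma>) X"
      using part3[OF a0] z by auto
    hence "u *\<^sub>R \<Lambda> a0 z1 + v *\<^sub>R \<Lambda> a0 z2 \<in> Prox (\<phi> \<circ> \<gamma>) (\<psi> \<circ> \<gamma>) X"
      using convexD[OF cF] uv by blast
    moreover have "u *\<^sub>R \<Lambda> a0 z1 + v *\<^sub>R \<Lambda> a0 z2 = \<Lambda> a0 (u *\<^sub>R z1 + v *\<^sub>R z2)"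
      using L_lin[of a0] by (simp add: linear_add linear_scale)
    ultimately show "u *\<^sub>R z1 + v *\<^sub>R z2 \<in> Prox \<phi> \<psi> (\<gamma> X)" using part3[OF a0] by simp
  qed
next
  assume cP: "convex (Prox \<phi> \<psi> (\<gamma> X))"
  show "convex (Prox (\<phi> \<circ> \<gamma>) (\<psi> \<circ> \<gamma>) X)"
  proof (rule convexI)
    fix Z1 Z2 and u v :: real
    assume Z: "Z1 \<in> Prox (\<phi> \<circ> \<gamma>) (\<psi> \<circ> \<gamma>) X" "Z2 \<in> Prox (\<phi> \<circ> \<gamma>) (\<psi> \<circ> \<gamma>) X"
      and uv: "0 \<le> u" "0 \<le> v" "u + v = 1"
    define t where "t = v"
    have t: "0 \<le> t" "t \<le> 1" "u = 1 - t" using uv unfolding t_def by auto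
    define w where "w = (1 - t) *\<^sub>R \<gamma> Z1 + t *\<^sub>R \<gamma> Z2"
    define M where "M = (1 - t) *\<^sub>R Z1 + t *\<^sub>R Z2"
    have zP: "\<gamma> Z1 \<in> Prox \<phi> \<psi> (\<gamma> X)" "\<gamma> Z2 \<in> Prox \<phi> \<psi> (\<gamma> X)" using PFD(1) Z by auto
    have ie: "inner Z1 GX = inner (\<gamma> Z1) gx" "inner Z2 GX = inner (\<gamma> Z2) gx" using PFD(2) Z by auto
    have wP: "w \<in> Prox \<phi> \<psi> (\<gamma> X)" unfolding w_def using convexD[OF cP zP] t by simp
    have hull: "\<gamma> M \<in> convex hull (orbit S w)" unfolding M_def w_def by (rule maj[OF t(1,2)])
    have iM: "inner M GX = inner w gx" unfolding M_def w_def using ie by (simp add: inner_add_left)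
    have ge: "inner (\<gamma> M) gx \<ge> inner w gx" using innerle[of M] iM by simp
    define C where "C = Prox \<phi> \<psi> (\<gamma> X) \<inter> {y. inner gx y \<le> inner w gx}"
    have cC: "convex C" unfolding C_def by (rule convex_Int[OF cP convex_halfspace_le])
    have "\<gamma> M \<in> C"
    proof (rule face_lemma[OF hull _ ge cC])
      fix p assume "p \<in> orbit S w"
      then obtain s where s: "s \<in> S" "p = s w" unfolding orbit_def by blast
      have sw: "s w = (1 - t) *\<^sub>R s (\<gamma> Z1) + t *\<^sub>R s (\<gamma> Z2)"
        unfolding w_def using S_lin[OF s(1)] by (simp add: linear_add linear_scale)
      have a1: "inner (s (\<gamma> Z1)) gx \<le> inner (\<gamma> Z1) gx" using align[OF s(1), of Z1 GX] gG by simp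
      have a2: "inner (s (\<gamma> Z2)) gx \<le> inner (\<gamma> Z2) gx" using align[OF s(1), of Z2 GX] gG by simp
      have "(1 - t) * inner (s (\<gamma> Z1)) gx + t * inner (s (\<gamma> Z2)) gx \<le> (1 - t) * inner (\<gamma> Z1) gx + t * inner (\<gamma> Z2) gx"
        using a1 a2 t by (intro add_mono mult_left_mono) auto
      moreover have "inner p gx = (1 - t) * inner (s (\<gamma> Z1)) gx + t * inner (s (\<gamma> Z2)) gx"
        unfolding s(2) sw by (simp add: inner_add_left)
      moreover have "inner w gx = (1 - t) * inner (\<gamma> Z1) gx + t * inner (\<gamma> Z2) gx"
        unfolding w_def by (simp add: inner_add_left)
      ultimately show "inner p gx \<le> inner w gx" by simp
    next
      fix p assume p: "p \<in> orbit S w" "inner p gx = inner w gx"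
      then obtain s where s: "s \<in> S" "p = s w" unfolding orbit_def by blast
      have "hh p = hh w"
        unfolding hf s(2) using S_inv_f[OF phi_inv s(1)] S_inv_f[OF psi_inv s(1)] p(2) s(2)
        by (simp add: inner_diff_left)
      hence "p \<in> Prox \<phi> \<psi> (\<gamma> X)" using wP memP by simp
      thus "p \<in> C" unfolding C_def using p(2) by (simp add: inner_commute)
    qed
    hence gMP: "\<gamma> M \<in> Prox \<phi> \<psi> (\<gamma> X)" and "inner gx (\<gamma> M) \<le> inner w gx" unfolding C_def by auto
    hence "inner M GX = inner (\<gamma> M) gx" using ge iM by (simp add: inner_commute)
    hence "HH M = hh (\<gamma> M)" by (rule P4)
    hence "M \<in> Prox (\<phi> \<circ> \<gamma>) (\<psi> \<circ> \<gamma>) X" using gMP memP memF by simp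
    thus "u *\<^sub>R Z1 + v *\<^sub>R Z2 \<in> Prox (\<phi> \<circ> \<gamma>) (\<psi> \<circ> \<gamma>) X" unfolding M_def t_def t(3) t_def .
  qed
qed

lemma part6: "(\<exists>Z. Prox (\<phi> \<circ> \<gamma>) (\<psi> \<circ> \<gamma>) X = {Z}) \<longleftrightarrow> (\<exists>z. Prox \<phi> \<psi> (\<gamma> X) = {z})"
proof -
  obtain a0 where a0: "X = \<Lambda> a0 (\<gamma> X)" using dec by blast
  show ?thesis
  proof
    assume "\<exists>Z. Prox (\<phi> \<circ> \<gamma>) (\<psi> \<circ> \<gamma>) X = {Z}"
    then obtain Z where Z: "Prox (\<phi> \<circ> \<gamma>) (\<psi> \<circ> \<gamma>) X = {Z}" by blast
    have gZ: "\<gamma> Z \<in> Prox \<phi> \<psi> (\<gamma> X)" using PFD(1)[of Z] Z by simp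
    have "\<Lambda> a0 (\<gamma> Z) = Z" using part3[OF a0, of "\<gamma> Z"] gZ Z by simp
    have "Prox \<phi> \<psi> (\<gamma> X) = {\<gamma> Z}"
    proof (rule set_eqI, rule iffI)
      fix z assume "z \<in> Prox \<phi> \<psi> (\<gamma> X)"
      hence "\<Lambda> a0 z = Z" using part3[OF a0, of z] Z by simp
      hence "\<Lambda> a0 z = \<Lambda> a0 (\<gamma> Z)" using \<open>\<Lambda> a0 (\<gamma> Z) = Z\<close> by simp
      thus "z \<in> {\<gamma> Z}" using L_inj by blast
    qed (use gZ in simp)
    thus "\<exists>z. Prox \<phi> \<psi> (\<gamma> X) = {z}" by blast
  next
    assume "\<exists>z. Prox \<phi> \<psi> (\<gamma> X) = {z}"
    then obtain z where z: "Prox \<phi> \<psi> (\<gamma> X) = {z}" by blast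
    have cF: "convex (Prox (\<phi> \<circ> \<gamma>) (\<psi> \<circ> \<gamma>) X)" using part5 z by simp
    have inF: "\<Lambda> a0 z \<in> Prox (\<phi> \<circ> \<gamma>) (\<psi> \<circ> \<gamma>) X" using part3[OF a0, of z] z by simp
    have "Prox (\<phi> \<circ> \<gamma>) (\<psi> \<circ> \<gamma>) X = {\<Lambda> a0 z}"
    proof (rule set_eqI, rule iffI)
      fix Z assume Z: "Z \<in> Prox (\<phi> \<circ> \<gamma>) (\<psi> \<circ> \<gamma>) X"
      have gZ: "\<gamma> Z = z" using PFD(1)[OF Z] z by simp
      define M where "M = (1/2) *\<^sub>R Z + (1/2) *\<^sub>R \<Lambda> a0 z"
      have "M \<in> Prox (\<phi> \<circ> \<gamma>) (\<psi> \<circ> \<gamma>) X" unfolding M_def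
        by (rule convexD[OF cF Z inF]) auto
      hence gM: "\<gamma> M = z" using PFD(1) z by blast
      have "Z = \<Lambda> a0 z"
      proof (rule par_eq)
        show "norm Z = norm z" using norm_g[of Z] gZ by simp
        show "norm (\<Lambda> a0 z) = norm z" by (rule L_iso)
        have "(1/2) *\<^sub>R (Z + \<Lambda> a0 z) = M" unfolding M_def by (simp add: scaleR_add_right)
        thus "norm ((1/2) *\<^sub>R (Z + \<Lambda> a0 z)) = norm z" using norm_g[of M] gM by simp
      qed
      thus "Z \<in> {\<Lambda> a0 z}" by simp
    qed (use inF in simp)
    thus "\<exists>Z. Prox (\<phi> \<circ> \<gamma>) (\<psi> \<circ> \<gamma>) X = {Z}" by blast
  qed
qed

lemma part2: "Z \<in> Prox (\<phi> \<circ> \<gamma>) (\<psi> \<circ> \<gamma>) X \<longleftrightarrow>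
          \<gamma> Z \<in> Prox \<phi> \<psi> (\<gamma> X) \<and> (\<exists>a. X = \<Lambda> a (\<gamma> X) \<and> Z = \<Lambda> a (\<gamma> Z))"
  using PFD(1,3) PFI by blast

lemma part1: "env (\<phi> \<circ> \<gamma>) (\<psi> \<circ> \<gamma>) X = env \<phi> \<psi> (\<gamma> X)"
  unfolding env_def using infeq by simp

end

context spec
begin

theorem main:
  "env (\<phi> \<circ> \<gamma>) (\<psi> \<circ> \<gamma>) X = env \<phi> \<psi> (\<gamma> X)
    \<and> (\<forall>Z. Z \<in> Prox (\<phi> \<circ> \<gamma>) (\<psi> \<circ> \<gamma>) X \<longleftrightarrow>
          \<gamma> Z \<in> Prox \<phi> \<psi> (\<gamma> X) \<and> (\<exists>a. X = \<Lambda> a (\<gamma> X) \<and> Z = \<Lambda> a (\<gamma> Z)))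
    \<and> (\<forall>z. \<forall>a\<in>Aset \<gamma> \<Lambda> X. \<Lambda> a z \<in> Prox (\<phi> \<circ> \<gamma>) (\<psi> \<circ> \<gamma>) X \<longleftrightarrow> z \<in> Prox \<phi> \<psi> (\<gamma> X))
    \<and> Prox (\<phi> \<circ> \<gamma>) (\<psi> \<circ> \<gamma>) X = {\<Lambda> a z | z a. z \<in> Prox \<phi> \<psi> (\<gamma> X) \<and> a \<in> Aset \<gamma> \<Lambda> X}
    \<and> (convex (Prox (\<phi> \<circ> \<gamma>) (\<psi> \<circ> \<gamma>) X) \<longleftrightarrow> convex (Prox \<phi> \<psi> (\<gamma> X)))
    \<and> ((\<exists>Z. Prox (\<phi> \<circ> \<gamma>) (\<psi> \<circ> \<gamma>) X = {Z}) \<longleftrightarrow> (\<exists>z. Prox \<phi> \<psi> (\<gamma> X) = {z}))"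
proof (cases "\<gamma> X \<in> interior (edom \<psi>)")
  case True
  interpret specX S \<gamma> \<Lambda> \<phi> \<psi> X by unfold_locales (rule True)
  show ?thesis
    using part1 part2 part4 part5 part6 part3 unfolding Aset_def by blast
next
  case False
  have nX: "X \<notin> interior (edom (\<psi> \<circ> \<gamma>))" using int_dom False by blast
  have h1: "(\<lambda>y. \<phi> y + bregman \<psi> y (\<gamma> X)) = (\<lambda>y. \<infinity>)"
  proof
    fix y show "\<phi> y + bregman \<psi> y (\<gamma> X) = \<infinity>"
      using False phi_nm[of y] unfolding bregman_def by (cases "\<phi> y") auto
  qed
  have h2: "(\<lambda>Y. (\<phi> \<circ> \<gamma>) Y + bregman (\<psi> \<circ> \<gamma>) Y X) = (\<lambda>Y. \<infinity>)"
  proof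
    fix Y show "(\<phi> \<circ> \<gamma>) Y + bregman (\<psi> \<circ> \<gamma>) Y X = \<infinity>"
      using nX phi_nm[of "\<gamma> Y"] unfolding bregman_def by (cases "\<phi> (\<gamma> Y)") auto
  qed
  have e1: "env \<phi> \<psi> (\<gamma> X) = \<infinity>" unfolding env_def h1 by simp
  have e2: "env (\<phi> \<circ> \<gamma>) (\<psi> \<circ> \<gamma>) X = \<infinity>" unfolding env_def h2 by simp
  have p1: "Prox \<phi> \<psi> (\<gamma> X) = {}" unfolding Prox_def Argmin_def h1 by simp
  have p2: "Prox (\<phi> \<circ> \<gamma>) (\<psi> \<circ> \<gamma>) X = {}" unfolding Prox_def Argmin_def h2 by simp
  show ?thesis unfolding e1 e2 p1 p2 by simp
qed

end

theorem theorem6p2: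
  fixes S :: "('x::euclidean_space \<Rightarrow> 'x) set"
    and \<gamma> :: "'h::euclidean_space \<Rightarrow> 'x"
    and \<Lambda> :: "'a \<Rightarrow> 'x \<Rightarrow> 'h"
    and \<phi> \<psi> :: "'x \<Rightarrow> ereal"
    and X :: 'h
  assumes sds: "spectral_decomposition_system S \<gamma> \<Lambda>"
    and phi_proper: "eproper \<phi>" and phi_inv: "S_invariant S \<phi>"
    and psi_Gamma0: "Gamma0 \<psi>" and psi_inv: "S_invariant S \<psi>" and psi_Leg: "Legendre \<psi>"
    and doms: "edom \<phi> \<inter> edom \<psi> \<noteq> {}"
  shows "env (\<phi> \<circ> \<gamma>) (\<psi> \<circ> \<gamma>) X = env \<phi> \<psi> (\<gamma> X)
    \<and> (\<forall>Z. Z \<in> Prox (\<phi> \<circ> \<gamma>) (\<psi> \<circ> \<gamma>) X \<longleftrightarrow>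
          \<gamma> Z \<in> Prox \<phi> \<psi> (\<gamma> X) \<and> (\<exists>a. X = \<Lambda> a (\<gamma> X) \<and> Z = \<Lambda> a (\<gamma> Z)))
    \<and> (\<forall>z. \<forall>a\<in>Aset \<gamma> \<Lambda> X. \<Lambda> a z \<in> Prox (\<phi> \<circ> \<gamma>) (\<psi> \<circ> \<gamma>) X \<longleftrightarrow> z \<in> Prox \<phi> \<psi> (\<gamma> X))
    \<and> Prox (\<phi> \<circ> \<gamma>) (\<psi> \<circ> \<gamma>) X = {\<Lambda> a z | z a. z \<in> Prox \<phi> \<psi> (\<gamma> X) \<and> a \<in> Aset \<gamma> \<Lambda> X}
    \<and> (convex (Prox (\<phi> \<circ> \<gamma>) (\<psi> \<circ> \<gamma>) X) \<longleftrightarrow> convex (Prox \<phi> \<psi> (\<gamma> X)))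
    \<and> ((\<exists>Z. Prox (\<phi> \<circ> \<gamma>) (\<psi> \<circ> \<gamma>) X = {Z}) \<longleftrightarrow> (\<exists>z. Prox \<phi> \<psi> (\<gamma> X) = {z}))"
  proof -
  interpret spec S \<gamma> \<Lambda> \<phi> \<psi> by unfold_locales (rule assms)+
  show ?thesis by (rule main)
qed

end
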